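(* Let $a_{ij}\ge 0$ for $1\le i\ne j\le N$ with $a_{ij}=a_{ji}$, and let $L$ be the matrix with $L_{ii}=\sum_{j\ne i}a_{ij}$, $L_{ij}=-a_{ij}$ ($i\ne j$); assume $L$ is symmetric and connected (irreducible), and let $\lambda_2$ be its second smallest eigenvalue. Let $\mathbf S(t)$ be the stochastic consensus model: independent Poisson processes $N^{ij}$ of rate $a_{ij}$, and $\mathrm dS_i=\sum_{j\ne i}(S_j-S_i)\,\mathrm dN^{ij}$. With $V(\mathbf S)=\frac1N\sum_{i=1}^N|S_i-\bar S|^2$, $\bar S=\frac1N\sum_iS_i$, we have for all $t\ge0$ $$\mathbb E[V(\mathbf S(t))]\le e^{-\lambda_2 t/N}\,\mathbb E[V(\mathbf S(0))].$$
   Context: Connected (irreducible) means: for every $i\ne j$ there is a sequence $i=q_1,\dots,q_k=j$ with $a_{q_lq_{l+1}}>0$ for all $l$. *)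

theory Defs
  imports "HOL-Probability.Probability" "HOL-Computational_Algebra.Polynomial"
begin

text \<open>Agents are indexed by a finite type 'n, so N = CARD('n).
  Only the off-diagonal weights a i j (i different from j) are used.\<close>

definition laplacian :: "('n::finite \<Rightarrow> 'n \<Rightarrow> real) \<Rightarrow> real^'n^'n" where
  "laplacian a = (\<chi> i j. if i = j then (\<Sum>k\<in>UNIV - {i}. a i k) else - a i j)"

definition weights_connected :: "('n::finite \<Rightarrow> 'n \<Rightarrow> real) \<Rightarrow> bool" where
  "weights_connected a \<longleftrightarrow>
     (\<forall>i j. i \<noteq> j \<longrightarrow> (\<exists>qs. qs \<noteq> [] \<and> hd qs = i \<and> last qs = j \<and>
        (\<forall>l. Suc l < length qs \<longrightarrow> qs ! l \<noteq> qs ! Suc l \<and> a (qs ! l) (qs ! Suc l) > 0)))"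

definition charpoly :: "real^'n^'n \<Rightarrow> real poly" where
  "charpoly A = det (\<chi> i j. (if i = j then [:0, 1:] else 0) - [:A $ i $ j:])"

definition eig_count :: "real^'n^'n \<Rightarrow> real \<Rightarrow> nat" where
  "eig_count A x = (\<Sum>\<mu>\<in>{\<mu>. poly (charpoly A) \<mu> = 0 \<and> \<mu> \<le> x}. order \<mu> (charpoly A))"

text \<open>k-th smallest eigenvalue (with multiplicity), k = 1, 2, ...\<close>
definition kth_eigenvalue :: "real^'n^'n \<Rightarrow> nat \<Rightarrow> real" where
  "kth_eigenvalue A k = (LEAST x. k \<le> eig_count A x)"

definition left_lim :: "(real \<Rightarrow> real) \<Rightarrow> real \<Rightarrow> real" where
  "left_lim f s = Lim (at_left s) f"

definition jump_times :: "(real \<Rightarrow> nat) \<Rightarrow> real \<Rightarrow> real set" where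
  "jump_times n t = {s \<in> {0<..t}. real (n s) \<noteq> left_lim (\<lambda>u. real (n u)) s}"

text \<open>Independence of the processes and of their increments is expressed by
  mutual independence of all increments over any finite time grid 0 = t_0 <= ... <= t_k
  (together with S 0).\<close>
definition off_diag :: "('n \<times> 'n) set" where
  "off_diag = {(i, j). i \<noteq> j}"

definition poisson_clocks ::
  "'a measure \<Rightarrow> ('n::finite \<Rightarrow> 'n \<Rightarrow> real) \<Rightarrow> ('n \<times> 'n \<Rightarrow> real \<Rightarrow> 'a \<Rightarrow> nat)
     \<Rightarrow> (real \<Rightarrow> 'a \<Rightarrow> 'n \<Rightarrow> real) \<Rightarrow> bool" where
  "poisson_clocks M a Np S \<longleftrightarrow>
     (\<forall>p\<in>off_diag. \<forall>t\<ge>0. Np p t \<in> measurable M (count_space UNIV)) \<and>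
     (\<forall>p\<in>off_diag. \<forall>\<omega>\<in>space M. Np p 0 \<omega> = 0 \<and>
        mono_on {0..} (\<lambda>t. Np p t \<omega>) \<and>
        (\<forall>t\<ge>0. continuous (at_right t) (\<lambda>s. real (Np p s \<omega>)))) \<and>
     (\<forall>p\<in>off_diag. \<forall>s t k. 0 \<le> s \<longrightarrow> s \<le> t \<longrightarrow>
        measure M {\<omega>\<in>space M. Np p t \<omega> - Np p s \<omega> = k}
          = (case p of (i, j) \<Rightarrow> (a i j * (t - s)) ^ k / fact k * exp (- (a i j * (t - s))))) \<and>
     (\<forall>(tt :: nat \<Rightarrow> real) k. tt 0 = 0 \<and> (\<forall>m<k. tt m \<le> tt (Suc m)) \<longrightarrow>
        prob_space.indep_sets M
          (\<lambda>x. case x of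
               None \<Rightarrow> {(\<lambda>\<omega>. S 0 \<omega>) -` A \<inter> space M | A. A \<in> sets (Pi\<^sub>M UNIV (\<lambda>_. borel))}
             | Some (p, m) \<Rightarrow> {(\<lambda>\<omega>. Np p (tt (Suc m)) \<omega> - Np p (tt m) \<omega>) -` A \<inter> space M
                                  | A. A \<in> sets (count_space UNIV)})
          (insert None (Some ` (off_diag \<times> {..<k}))))"

text \<open>Pathwise (integral) form of dS_i = sum_{j ~= i} (S_j - S_i) dN^{ij}: the
  stochastic integral against a counting process is the sum over its jump times.\<close>
definition consensus_solution ::
  "'a measure \<Rightarrow> ('n::finite \<times> 'n \<Rightarrow> real \<Rightarrow> 'a \<Rightarrow> nat) \<Rightarrow> (real \<Rightarrow> 'a \<Rightarrow> 'n \<Rightarrow> real) \<Rightarrow> bool" where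
  "consensus_solution M Np S \<longleftrightarrow>
     (\<forall>t\<ge>0. (\<lambda>\<omega>. S t \<omega>) \<in> measurable M (Pi\<^sub>M UNIV (\<lambda>_. borel))) \<and>
     (AE \<omega> in M. \<forall>t\<ge>0. \<forall>i. S t \<omega> i = S 0 \<omega> i +
        (\<Sum>j\<in>UNIV - {i}. \<Sum>s\<in>jump_times (\<lambda>u. Np (i, j) u \<omega>) t.
           (left_lim (\<lambda>u. S u \<omega> j) s - left_lim (\<lambda>u. S u \<omega> i) s) *
           (real (Np (i, j) s \<omega>) - left_lim (\<lambda>u. real (Np (i, j) u \<omega>)) s)))"

definition mean_state :: "('n::finite \<Rightarrow> real) \<Rightarrow> real" where
  "mean_state x = (\<Sum>i\<in>UNIV. x i) / real CARD('n)"

definition V :: "('n::finite \<Rightarrow> real) \<Rightarrow> real" where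
  "V x = (\<Sum>i\<in>UNIV. (x i - mean_state x)\<^sup>2) / real CARD('n)"

end

theory Submission
  imports Defs
begin

definition aa :: "('n \<Rightarrow> 'n \<Rightarrow> real) \<Rightarrow> 'n \<Rightarrow> 'n \<Rightarrow> real" where
  "aa a i j = (if i = j then 0 else a i j)"

definition Qf :: "('n::finite \<Rightarrow> 'n \<Rightarrow> real) \<Rightarrow> ('n \<Rightarrow> real) \<Rightarrow> real" where
  "Qf a x = (\<Sum>i\<in>UNIV. \<Sum>j\<in>UNIV. aa a i j * (x i - x j)^2)"

definition Wf :: "('n::finite \<Rightarrow> real) \<Rightarrow> real" where
  "Wf x = (\<Sum>i\<in>UNIV. (x i - mean_state x)^2)"

lemma antisym_sum0:
  fixes f :: "'n::finite \<Rightarrow> 'n \<Rightarrow> real"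
  assumes "\<And>i j. f i j = - f j i"
  shows "(\<Sum>i\<in>UNIV. \<Sum>j\<in>UNIV. f i j) = 0"
proof -
  have "(\<Sum>i\<in>UNIV. \<Sum>j\<in>UNIV. f i j) = (\<Sum>j\<in>UNIV. \<Sum>i\<in>UNIV. f i j)"
    by (rule sum.swap)
  also have "\<dots> = (\<Sum>j\<in>UNIV. \<Sum>i\<in>UNIV. - f j i)"
    by (intro sum.cong refl) (rule assms)
  also have "\<dots> = - (\<Sum>j\<in>UNIV. \<Sum>i\<in>UNIV. f j i)"
    by (simp add: sum_negf)
  finally show ?thesis by simp
qed

lemma lap_mult: "(laplacian a *v x) $ i = (\<Sum>j\<in>UNIV. aa a i j * (x$i - x$j))"
proof -
  have "(laplacian a *v x) $ i = (\<Sum>j\<in>UNIV. (if i = j then (\<Sum>k\<in>UNIV - {i}. a i k) else - a i j) * x$j)"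
    by (simp add: matrix_vector_mult_def laplacian_def)
  also have "\<dots> = (\<Sum>k\<in>UNIV - {i}. a i k) * x$i + (\<Sum>j\<in>UNIV-{i}. - a i j * x$j)"
    by (subst sum.remove[of UNIV i]) (auto intro!: sum.cong)
  also have "\<dots> = (\<Sum>j\<in>UNIV-{i}. a i j * (x$i - x$j))"
    by (simp add: sum_distrib_right right_diff_distrib sum_subtractf sum_negf)
  also have "\<dots> = (\<Sum>j\<in>UNIV. aa a i j * (x$i - x$j))"
    by (simp add: sum.remove[of UNIV i] aa_def)
  finally show ?thesis .
qed

lemma Qf_split:
  assumes sym: "\<And>i j. aa a i j = aa a j i"
  shows "Qf a x = 2 * (\<Sum>i\<in>UNIV. \<Sum>j\<in>UNIV. aa a i j * x i * (x i - x j))"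
proof -
  have "Qf a x = (\<Sum>i\<in>UNIV. \<Sum>j\<in>UNIV. aa a i j * x i * (x i - x j))
     + (\<Sum>i\<in>UNIV. \<Sum>j\<in>UNIV. aa a i j * x j * (x j - x i))"
    unfolding Qf_def sum.distrib[symmetric]
    by (intro sum.cong refl) (simp add: power2_eq_square algebra_simps)
  also have "(\<Sum>i\<in>UNIV. \<Sum>j\<in>UNIV. aa a i j * x j * (x j - x i))
      = (\<Sum>i\<in>UNIV. \<Sum>j\<in>UNIV. aa a i j * x i * (x i - x j))"
    by (subst sum.swap) (simp add: sym)
  finally show ?thesis by simp
qed

lemma quad_form:
  assumes sym: "\<And>i j. aa a i j = aa a j i"
  shows "x \<bullet> (laplacian a *v x) = Qf a (\<lambda>i. x$i) / 2"
proof -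
  have "x \<bullet> (laplacian a *v x) = (\<Sum>i\<in>UNIV. \<Sum>j\<in>UNIV. aa a i j * x$i * (x$i - x$j))"
    unfolding inner_vec_def lap_mult
    by (intro sum.cong refl) (simp add: sum_distrib_left algebra_simps)
  then show ?thesis by (simp add: Qf_split[OF sym])
qed

lemma Qf_nonneg:
  assumes "\<And>i j. i \<noteq> j \<Longrightarrow> 0 \<le> a i j"
  shows "0 \<le> Qf a x"
  unfolding Qf_def by (intro sum_nonneg) (auto simp: aa_def assms)

lemma poly_det: "poly (det P) x = det (\<chi> i j. poly (P$i$j) x)"
  unfolding det_def by (simp add: poly_sum poly_prod)

lemma charpoly_eval: "poly (charpoly A) \<mu> = det (\<chi> i j. (if i = j then \<mu> else 0) - A$i$j)"
  unfolding charpoly_def poly_det by (intro arg_cong[where f=det]) (simp add: vec_eq_iff)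

lemma Cmat_mult: "(\<chi> i j. (if i = j then \<mu> else 0) - A$i$j) *v x = \<mu> *\<^sub>R x - A *v x"
proof -
  have "(\<Sum>j\<in>UNIV. ((if i = j then \<mu> else 0) - A$i$j) * x $ j) = \<mu> * x $ i - (\<Sum>j\<in>UNIV. A $ i $ j * x $ j)" for i
  proof -
    have "(\<Sum>j\<in>UNIV. ((if i = j then \<mu> else 0) - A$i$j) * x $ j)
       = (\<Sum>j\<in>UNIV. (if i = j then \<mu> * x$j else 0)) - (\<Sum>j\<in>UNIV. A $ i $ j * x $ j)"
      by (simp add: left_diff_distrib sum_subtractf if_distrib[of "\<lambda>u. u * x$_"])
    then show ?thesis by simp
  qed
  then show ?thesis by (simp add: vec_eq_iff matrix_vector_mult_def)
qed

lemma det_zero_if_kernel: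
  fixes A :: "real^'n^'n"
  assumes "A *v x = 0" "x \<noteq> 0" shows "det A = 0"
proof -
  have "\<not> inj ((*v) A)"
    using assms by (metis inj_eq matrix_vector_mult_0_right)
  then show ?thesis
    using det_nz_iff_inj[of "(*v) A"] by (simp add: matrix_of_matrix_vector_mul)
qed

lemma det_nz_if_kernel_trivial:
  fixes A :: "real^'n^'n"
  assumes "\<And>x. A *v x = 0 \<Longrightarrow> x = 0" shows "det A \<noteq> 0"
proof -
  have "inj ((*v) A)"
  proof (rule injI)
    fix x y assume "A *v x = A *v y"
    then have "A *v (x - y) = 0" by (simp add: matrix_vector_mult_diff_distrib)
    then show "x = y" using assms[of "x - y"] by simp
  qed
  then show ?thesis
    using det_nz_iff_inj[of "(*v) A"] by (simp add: matrix_of_matrix_vector_mul)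
qed

lemma chain_const:
  assumes "\<And>l. Suc l < length qs \<Longrightarrow> x (qs!l) = x (qs ! Suc l)" "qs \<noteq> []"
  shows "x (hd qs) = x (last qs)"
  using assms
proof (induction qs)
  case Nil then show ?case by simp
next
  case (Cons q qs)
  show ?case
  proof (cases qs)
    case Nil then show ?thesis by simp
  next
    case (Cons q' qs')
    have "x q = x q'" using Cons.prems(1)[of 0] \<open>qs = q' # qs'\<close> by simp
    moreover have h: "x (qs!l) = x (qs!Suc l)" if "Suc l < length qs" for l
      using Cons.prems(1)[of "Suc l"] that by simp
    have "x (hd qs) = x (last qs)"
      using Cons.IH[OF h] \<open>qs = q'#qs'\<close> by auto
    ultimately show ?thesis using \<open>qs = q'#qs'\<close> by simp
  qed
qed

definition Bf :: "('n::finite \<Rightarrow> 'n \<Rightarrow> real) \<Rightarrow> ('n \<Rightarrow> real) \<Rightarrow> ('n \<Rightarrow> real) \<Rightarrow> real" where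
  "Bf a x z = (\<Sum>i\<in>UNIV. \<Sum>j\<in>UNIV. aa a i j * (x i - x j) * (z i - z j))"

lemma Bf_split:
  assumes sym: "\<And>i j. aa a i j = aa a j i"
  shows "Bf a x z = 2 * (\<Sum>i\<in>UNIV. \<Sum>j\<in>UNIV. aa a i j * x i * (z i - z j))"
proof -
  have "Bf a x z = (\<Sum>i\<in>UNIV. \<Sum>j\<in>UNIV. aa a i j * x i * (z i - z j))
     + (\<Sum>i\<in>UNIV. \<Sum>j\<in>UNIV. aa a i j * x j * (z j - z i))"
    unfolding Bf_def sum.distrib[symmetric]
    by (intro sum.cong refl) (simp add: algebra_simps)
  also have "(\<Sum>i\<in>UNIV. \<Sum>j\<in>UNIV. aa a i j * x j * (z j - z i))
      = (\<Sum>i\<in>UNIV. \<Sum>j\<in>UNIV. aa a i j * x i * (z i - z j))"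
    by (subst sum.swap) (simp add: sym)
  finally show ?thesis by simp
qed

lemma bilin_form:
  assumes sym: "\<And>i j. aa a i j = aa a j i"
  shows "x \<bullet> (laplacian a *v z) = Bf a (\<lambda>i. x$i) (\<lambda>i. z$i) / 2"
proof -
  have "x \<bullet> (laplacian a *v z) = (\<Sum>i\<in>UNIV. \<Sum>j\<in>UNIV. aa a i j * x$i * (z$i - z$j))"
    unfolding inner_vec_def lap_mult
    by (intro sum.cong refl) (simp add: sum_distrib_left algebra_simps)
  then show ?thesis by (simp add: Bf_split[OF sym])
qed

lemma lap_symm:
  assumes sym: "\<And>i j. aa a i j = aa a j i"
  shows "x \<bullet> (laplacian a *v z) = z \<bullet> (laplacian a *v x)"
  unfolding bilin_form[OF sym] Bf_def by (simp add: algebra_simps)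

lemma lap_sum0:
  assumes sym: "\<And>i j. aa a i j = aa a j i"
  shows "(\<Sum>i\<in>UNIV. (laplacian a *v x) $ i) = 0"
proof -
  have "(\<Sum>i\<in>UNIV. (laplacian a *v x) $ i) = (\<Sum>i\<in>UNIV. \<Sum>j\<in>UNIV. aa a i j * (x$i - x$j))"
    by (simp add: lap_mult)
  also have "\<dots> = 0" by (rule antisym_sum0) (simp add: sym algebra_simps)
  finally show ?thesis .
qed

lemma quad_zero:
  fixes b c :: real
  assumes "\<And>e. 0 \<le> e * b + e^2 * c"
  shows "b = 0"
proof (rule ccontr)
  assume "b \<noteq> 0"
  define d where "d = \<bar>c\<bar> + 1"
  have d: "d > 0" by (simp add: d_def)
  define e where "e = - b / (2 * d)"
  have "0 \<le> e * b + e^2 * c" by (rule assms)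
  then have "0 \<le> (4 * d^2) * (e * b + e^2 * c)" using d by simp
  also have "(4 * d^2) * (e * b + e^2 * c) = - 2 * b^2 * d + b^2 * c"
    using d by (simp add: e_def power2_eq_square field_simps)
  also have "\<dots> \<le> - 2 * b^2 * d + b^2 * \<bar>c\<bar>"
    by (simp add: mult_left_mono)
  also have "\<dots> = - (b^2 * ( \<bar>c\<bar> + 2))" by (simp add: d_def algebra_simps)
  also have "\<dots> < 0" using \<open>b \<noteq> 0\<close> by (simp add: mult_pos_pos)
  finally show False by simp
qed

lemma spectral_gap:
  fixes a :: "'n::finite \<Rightarrow> 'n \<Rightarrow> real"
  assumes nonneg: "\<And>i j. i \<noteq> j \<Longrightarrow> 0 \<le> a i j"
    and symm: "\<And>i j. i \<noteq> j \<Longrightarrow> a i j = a j i"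
    and conn: "weights_connected a"
    and card: "2 \<le> CARD('n)"
  shows "\<exists>\<mu>>0. kth_eigenvalue (laplacian a) 2 \<le> \<mu> \<and> (\<forall>y. 2 * \<mu> * Wf y \<le> Qf a y)"
proof -
  have sym: "\<And>i j. aa a i j = aa a j i" using symm by (simp add: aa_def)
  define L where "L = laplacian a"
  define R where "R = (\<lambda>x::real^'n. Qf a (\<lambda>i. x$i) / 2)"
  define K where "K = {x::real^'n. (\<Sum>i\<in>UNIV. x$i) = 0} \<inter> sphere 0 1"
  have Rq: "\<And>x. x \<bullet> (L *v x) = R x" using quad_form[OF sym] by (simp add: L_def R_def)
  have R_nonneg: "\<And>x. 0 \<le> R x" using Qf_nonneg[OF nonneg] by (simp add: R_def)
  have Lsym: "\<And>x z. x \<bullet> (L *v z) = z \<bullet> (L *v x)" using lap_symm[OF sym] by (simp add: L_def)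
  have Lsum: "\<And>x. (\<Sum>i\<in>UNIV. (L *v x) $ i) = 0" using lap_sum0[OF sym] by (simp add: L_def)
  have compK: "compact K"
    unfolding K_def by (intro closed_Int_compact compact_sphere closed_Collect_eq continuous_intros)
  obtain i0 j0 :: 'n where ij0: "i0 \<noteq> j0"
  proof -
    have "\<not> (\<forall>i j::'n. i = j)"
    proof
      assume "\<forall>i j::'n. i = j"
      then have "(UNIV::'n set) \<subseteq> {undefined}" by auto
      then have "CARD('n) \<le> 1" using card_mono[of "{undefined}" UNIV] by simp
      then show False using card by simp
    qed
    then show ?thesis using that by blast
  qed
  define e where "e = axis i0 (1::real) - axis j0 1"
  have e0: "e \<noteq> 0" using ij0 by (simp add: e_def vec_eq_iff axis_def) (metis)
  have es: "(\<Sum>i\<in>UNIV. e$i) = 0"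
    using ij0 by (simp add: e_def axis_def sum_subtractf)
  have sum_scale: "\<And>c y. (\<Sum>i\<in>UNIV. (c *\<^sub>R y)$i) = c * (\<Sum>i\<in>UNIV. y$i)"
    by (simp add: sum_distrib_left)
  have "e /\<^sub>R norm e \<in> K" using e0 es by (simp add: K_def sum_distrib_left[symmetric])
  then have Kne: "K \<noteq> {}" by auto
  have contR: "continuous_on K R"
    unfolding R_def Qf_def by (intro continuous_intros) auto
  obtain x0 where x0K: "x0 \<in> K" and x0min: "\<And>y. y \<in> K \<Longrightarrow> R x0 \<le> R y"
    using continuous_attains_inf[OF compK Kne contR] by blast
  have x0s: "(\<Sum>i\<in>UNIV. x0$i) = 0" and x0n: "norm x0 = 1" using x0K by (auto simp: K_def)
  define \<mu> where "\<mu> = R x0"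
  have R_scale: "\<And>c x. R (c *\<^sub>R x) = c^2 * R x"
    by (simp add: R_def Qf_def sum_distrib_left power2_eq_square algebra_simps)
  have Rbound: "\<mu> * (norm y)^2 \<le> R y" if ys: "(\<Sum>i\<in>UNIV. y$i) = 0" for y
  proof (cases "y = 0")
    case True then show ?thesis by (simp add: R_def Qf_def)
  next
    case False
    have "y /\<^sub>R norm y \<in> K" using ys False by (simp add: K_def sum_distrib_left[symmetric])
    then have "\<mu> \<le> R (y /\<^sub>R norm y)" using x0min by (simp add: \<mu>_def)
    also have "\<dots> = R y / (norm y)^2" using R_scale[of "inverse (norm y)" y]
      by (simp add: field_simps power2_eq_square)
    finally show ?thesis using False by (simp add: field_simps)
  qed
  have mu_pos: "\<mu> > 0"
  proof -
    have "\<mu> \<noteq> 0"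
    proof
      assume "\<mu> = 0"
      then have Q0: "Qf a (\<lambda>i. x0$i) = 0" by (simp add: \<mu>_def R_def)
      have tnn: "\<And>i j. 0 \<le> aa a i j * (x0$i - x0$j)^2" by (simp add: aa_def nonneg)
      have terms: "\<And>i j. aa a i j * (x0$i - x0$j)^2 = 0"
      proof -
        fix i j
        have "\<forall>i\<in>UNIV. (\<Sum>j\<in>UNIV. aa a i j * (x0$i - x0$j)^2) = 0"
          using Q0 unfolding Qf_def by (subst sum_nonneg_eq_0_iff[symmetric]) (auto intro: sum_nonneg tnn)
        then have "\<forall>j\<in>UNIV. aa a i j * (x0$i - x0$j)^2 = 0"
          by (subst sum_nonneg_eq_0_iff[symmetric]) (auto intro: tnn)
        then show "aa a i j * (x0$i - x0$j)^2 = 0" by simp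
      qed
      have edge: "x0$i = x0$j" if "i \<noteq> j" "a i j > 0" for i j
        using terms[of i j] that by (simp add: aa_def)
      have const: "x0$i = x0$i0" for i
      proof (cases "i = i0")
        case False
        then obtain qs where qs: "qs \<noteq> []" "hd qs = i" "last qs = i0"
           "\<And>l. Suc l < length qs \<Longrightarrow> qs ! l \<noteq> qs ! Suc l \<and> a (qs ! l) (qs ! Suc l) > 0"
          using conn unfolding weights_connected_def by blast
        have "(\<lambda>k. x0$k) (hd qs) = (\<lambda>k. x0$k) (last qs)"
          by (rule chain_const) (use qs edge in auto)
        then show ?thesis using qs by simp
      qed simp
      have "(\<Sum>i\<in>UNIV. x0$i) = (\<Sum>i\<in>(UNIV::'n set). x0$i0)" using const by (intro sum.cong) auto
      then have "(\<Sum>i\<in>UNIV. x0$i) = of_nat CARD('n) * x0$i0" by simp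
      then have "x0$i0 = 0" using x0s card by simp
      then have "x0 = 0" using const by (simp add: vec_eq_iff)
      then show False using x0n by simp
    qed
    then show ?thesis using R_nonneg[of x0] by (simp add: \<mu>_def)
  qed
  have var: "z \<bullet> (L *v x0 - \<mu> *\<^sub>R x0) = 0" if zs: "(\<Sum>i\<in>UNIV. z$i) = 0" for z
  proof -
    define b where "b = 2 * (z \<bullet> (L *v x0 - \<mu> *\<^sub>R x0))"
    define c where "c = R z - \<mu> * (norm z)^2"
    have "0 \<le> \<epsilon> * b + \<epsilon>^2 * c" for \<epsilon>
    proof -
      have "(\<Sum>i\<in>UNIV. (x0 + \<epsilon> *\<^sub>R z)$i) = 0" using zs x0s
        by (simp add: sum.distrib sum_distrib_left[symmetric])
      then have ineq: "\<mu> * (norm (x0 + \<epsilon> *\<^sub>R z))^2 \<le> R (x0 + \<epsilon> *\<^sub>R z)" by (rule Rbound)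
      have e1: "R (x0 + \<epsilon> *\<^sub>R z) = R x0 + 2*\<epsilon> * (z \<bullet> (L *v x0)) + \<epsilon>^2 * R z"
      proof -
        have "R (x0 + \<epsilon> *\<^sub>R z) = (x0 + \<epsilon> *\<^sub>R z) \<bullet> (L *v (x0 + \<epsilon> *\<^sub>R z))" by (simp add: Rq)
        also have "\<dots> = x0 \<bullet> (L *v x0) + \<epsilon> * (x0 \<bullet> (L *v z)) + \<epsilon> * (z \<bullet> (L *v x0)) + \<epsilon>^2 * (z \<bullet> (L *v z))"
          by (simp add: matrix_vector_right_distrib inner_add_left inner_add_right
              matrix_vector_mult_scaleR power2_eq_square algebra_simps)
        finally show ?thesis using Lsym[of x0 z] by (simp add: Rq)
      qed
      have e2: "(norm (x0 + \<epsilon> *\<^sub>R z))^2 = 1 + 2*\<epsilon>*(z \<bullet> x0) + \<epsilon>^2 * (norm z)^2"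
      proof -
        have "(norm (x0 + \<epsilon> *\<^sub>R z))^2 = (x0 + \<epsilon> *\<^sub>R z) \<bullet> (x0 + \<epsilon> *\<^sub>R z)"
          by (simp only: power2_norm_eq_inner)
        also have "\<dots> = x0 \<bullet> x0 + 2*\<epsilon>*(z \<bullet> x0) + \<epsilon>^2 * (z \<bullet> z)"
          by (simp add: inner_add_left inner_add_right inner_commute power2_eq_square algebra_simps)
        finally show ?thesis using x0n by (simp add: dot_square_norm)
      qed
      show ?thesis using ineq unfolding e1 e2 b_def c_def \<mu>_def
        by (simp add: inner_diff_right algebra_simps power2_eq_square)
    qed
    then have "b = 0" by (rule quad_zero)
    then show ?thesis by (simp add: b_def)
  qed
  have eig: "L *v x0 = \<mu> *\<^sub>R x0"
  proof -
    define v where "v = L *v x0 - \<mu> *\<^sub>R x0"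
    have "(\<Sum>i\<in>UNIV. v$i) = 0" using Lsum x0s by (simp add: v_def sum_subtractf sum_distrib_left[symmetric])
    then have "v \<bullet> v = 0" using var by (simp add: v_def)
    then show ?thesis by (simp add: v_def)
  qed
  have x0nz: "x0 \<noteq> 0" using x0n by auto
  have r1: "poly (charpoly L) \<mu> = 0"
    unfolding charpoly_eval by (rule det_zero_if_kernel[OF _ x0nz]) (simp add: Cmat_mult eig)
  have L1: "L *v (1::real^'n) = 0" by (simp add: vec_eq_iff L_def lap_mult)
  have r0: "poly (charpoly L) 0 = 0"
  proof -
    have "(\<chi> i j. (if i = j then (0::real) else 0) - L$i$j) *v 1 = 0"
      by (simp only: Cmat_mult) (simp add: L1)
    then show ?thesis unfolding charpoly_eval
      by (rule det_zero_if_kernel) (simp add: vec_eq_iff)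
  qed
  have cpnz: "charpoly L \<noteq> 0"
  proof
    assume "charpoly L = 0"
    then have "poly (charpoly L) (-1) = 0" by simp
    moreover have "det (\<chi> i j. (if i = j then (-1::real) else 0) - L$i$j) \<noteq> 0"
    proof (rule det_nz_if_kernel_trivial)
      fix x :: "real^'n" assume "(\<chi> i j. (if i = j then (-1::real) else 0) - L$i$j) *v x = 0"
      then have "- x = L *v x" by (simp add: Cmat_mult algebra_simps)
      then have "x = - (L *v x)" by (metis minus_minus)
      then have "x \<bullet> x = - (x \<bullet> (L *v x))" by (metis inner_minus_right)
      then have "x \<bullet> x \<le> 0" using R_nonneg[of x] by (simp add: Rq)
      then show "x = 0" by (metis inner_eq_zero_iff inner_ge_zero order_antisym)
    qed
    ultimately show False by (simp add: charpoly_eval)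
  qed
  have cnt: "2 \<le> eig_count L \<mu>"
  proof -
    let ?S = "{m. poly (charpoly L) m = 0 \<and> m \<le> \<mu>}"
    have fin: "finite ?S"
      by (rule finite_subset[OF _ poly_roots_finite[OF cpnz]]) auto
    have sub: "{0, \<mu>} \<subseteq> ?S" using r0 r1 mu_pos by auto
    have o0: "order 0 (charpoly L) \<ge> 1" using r0 cpnz order_root[of "charpoly L" 0] by simp
    have o1: "order \<mu> (charpoly L) \<ge> 1" using r1 cpnz order_root[of "charpoly L" \<mu>] by simp
    have "2 \<le> (\<Sum>m\<in>{0, \<mu>}. order m (charpoly L))" using mu_pos o0 o1 by simp
    also have "\<dots> \<le> (\<Sum>m\<in>?S. order m (charpoly L))" by (rule sum_mono2[OF fin sub]) simp
    finally show ?thesis by (simp add: eig_count_def)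
  qed
  have lam: "kth_eigenvalue L 2 \<le> \<mu>"
  proof -
    define Rts where "Rts = {m. poly (charpoly L) m = 0}"
    have finR: "finite Rts" unfolding Rts_def by (rule poly_roots_finite[OF cpnz])
    have ec: "eig_count L x = (\<Sum>r\<in>{r\<in>Rts. r \<le> x}. order r (charpoly L))" for x
      by (simp add: eig_count_def Rts_def)
    define T where "T = {r\<in>Rts. 2 \<le> eig_count L r}"
    have finT: "finite T" using finR by (simp add: T_def)
    have muT: "\<mu> \<in> T" using cnt r1 by (simp add: T_def Rts_def)
    define m where "m = Min T"
    have mT: "m \<in> T" using finT muT by (auto simp: m_def intro: Min_in)
    have mle: "m \<le> \<mu>" using finT muT by (simp add: m_def)
    have least: "m \<le> y" if Py: "2 \<le> eig_count L y" for y
    proof -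
      define U where "U = {r\<in>Rts. r \<le> y}"
      have finU: "finite U" using finR by (simp add: U_def)
      have Une: "U \<noteq> {}"
      proof
        assume "U = {}"
        then have "eig_count L y = 0" by (simp add: ec U_def[symmetric])
        then show False using Py by simp
      qed
      define r' where "r' = Max U"
      have r'U: "r' \<in> U" using finU Une by (simp add: r'_def)
      have "{r\<in>Rts. r \<le> r'} = U"
        using r'U finU by (auto simp: U_def r'_def)
      then have "eig_count L r' = eig_count L y" by (simp add: ec U_def)
      then have "r' \<in> T" using Py r'U by (simp add: T_def U_def)
      then have "m \<le> r'" using finT by (simp add: m_def)
      then show ?thesis using r'U by (simp add: U_def)
    qed
    have "(LEAST x. 2 \<le> eig_count L x) = m"
      by (rule Least_equality) (use mT least in \<open>auto simp: T_def\<close>)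
    then show ?thesis using mle by (simp add: kth_eigenvalue_def)
  qed
  have QW: "2 * \<mu> * Wf y \<le> Qf a y" for y
  proof -
    define z where "z = (\<chi> i. y i - mean_state y)"
    have "(\<Sum>i\<in>UNIV. z$i) = 0" using card
      by (simp add: z_def sum_subtractf mean_state_def)
    then have "\<mu> * (norm z)^2 \<le> R z" by (rule Rbound)
    moreover have "(norm z)^2 = Wf y"
      unfolding power2_norm_eq_inner by (simp add: inner_vec_def z_def Wf_def power2_eq_square)
    moreover have "R z = Qf a y / 2" by (simp add: R_def z_def Qf_def)
    ultimately show ?thesis by simp
  qed
  show ?thesis using mu_pos lam QW unfolding L_def by blast
qed

lemma sum_upd_UNIV:
  fixes f :: "'n::finite \<Rightarrow> real"
  shows "(\<Sum>k\<in>UNIV. (f(i := v)) k) = (\<Sum>k\<in>UNIV. f k) - f i + v"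
proof -
  have "(\<Sum>k\<in>UNIV. (f(i := v)) k) = (f(i := v)) i + (\<Sum>k\<in>UNIV - {i}. (f(i := v)) k)"
    by (rule sum.remove) auto
  also have "(\<Sum>k\<in>UNIV - {i}. (f(i := v)) k) = (\<Sum>k\<in>UNIV - {i}. f k)"
    by (rule sum.cong) auto
  also have "\<dots> = (\<Sum>k\<in>UNIV. f k) - f i"
    by (simp add: sum.remove[of UNIV i f])
  finally show ?thesis by simp
qed

lemma Wf_alt:
  fixes x :: "'n::finite \<Rightarrow> real"
  shows "Wf x = (\<Sum>k\<in>UNIV. (x k)^2) - (\<Sum>k\<in>UNIV. x k)^2 / real CARD('n)"
proof -
  define s where "s = (\<Sum>k\<in>UNIV. x k)"
  define N where "N = real CARD('n)"
  have N: "N > 0" by (simp add: N_def)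
  have e1: "Wf x = (\<Sum>k\<in>UNIV. (x k)^2 - 2 * (s / N) * x k + (s / N)^2)"
    unfolding Wf_def mean_state_def s_def N_def by (intro sum.cong refl) (simp add: power2_diff)
  have e2: "(\<Sum>k\<in>UNIV. (x k)^2 - 2 * (s / N) * x k + (s / N)^2) = (\<Sum>k\<in>UNIV. (x k)^2) - (\<Sum>k\<in>UNIV. 2 * (s / N) * x k) + (\<Sum>k\<in>(UNIV::'n set). (s / N)^2)"
    by (simp only: sum.distrib sum_subtractf)
  have e3: "(\<Sum>k\<in>UNIV. 2 * (s / N) * x k) = 2 * (s / N) * s"
    by (simp only: sum_distrib_left[symmetric] s_def)
  have e4: "(\<Sum>k\<in>(UNIV::'n set). (s / N)^2) = N * (s / N)^2"
    by (simp add: N_def)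
  have "Wf x = (\<Sum>k\<in>UNIV. (x k)^2) - s^2 / N"
    unfolding e1 e2 e3 e4 using N by (simp add: field_simps power2_eq_square)
  then show ?thesis by (simp add: s_def N_def)
qed

lemma Wf_upd:
  fixes y :: "'n::finite \<Rightarrow> real"
  shows "Wf (y(i := y j)) - Wf y = ((y j)^2 - (y i)^2)
     - (2 * (\<Sum>k\<in>UNIV. y k) * (y j - y i) + (y i - y j)^2) / real CARD('n)"
proof -
  have sq: "(\<lambda>k. ((y(i := y j)) k)^2) = (\<lambda>k. (y k)^2)(i := (y j)^2)" by auto
  have A: "(\<Sum>k\<in>UNIV. ((y(i := y j)) k)^2) = (\<Sum>k\<in>UNIV. (y k)^2) - (y i)^2 + (y j)^2"
    unfolding sq by (rule sum_upd_UNIV)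
  have B: "(\<Sum>k\<in>UNIV. (y(i := y j)) k) = (\<Sum>k\<in>UNIV. y k) - y i + y j"
    by (rule sum_upd_UNIV)
  show ?thesis
    unfolding Wf_alt A B by (simp add: power2_eq_square field_simps)
qed

lemma W_jump_sum:
  fixes y :: "'n::finite \<Rightarrow> real"
  assumes sym: "\<And>i j. aa a i j = aa a j i"
  shows "(\<Sum>i\<in>UNIV. \<Sum>j\<in>UNIV. aa a i j * (Wf (y(i := y j)) - Wf y)) = - Qf a y / real CARD('n)"
proof -
  define s where "s = (\<Sum>k\<in>UNIV. y k)"
  define N where "N = real CARD('n)"
  have "(\<Sum>i\<in>UNIV. \<Sum>j\<in>UNIV. aa a i j * (Wf (y(i := y j)) - Wf y))
     = (\<Sum>i\<in>UNIV. \<Sum>j\<in>UNIV. aa a i j * ((y j)^2 - (y i)^2))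
       - (2 * s / N) * (\<Sum>i\<in>UNIV. \<Sum>j\<in>UNIV. aa a i j * (y j - y i))
       - (\<Sum>i\<in>UNIV. \<Sum>j\<in>UNIV. aa a i j * (y i - y j)^2) / N" (is "_ = ?rhs")
  proof -
    have N: "N \<noteq> 0" by (simp add: N_def)
    have "(\<Sum>i\<in>UNIV. \<Sum>j\<in>UNIV. aa a i j * (Wf (y(i := y j)) - Wf y))
      = (\<Sum>i\<in>UNIV. \<Sum>j\<in>UNIV. aa a i j * ((y j)^2 - (y i)^2) - (2 * s / N) * (aa a i j * (y j - y i))
           - aa a i j * (y i - y j)^2 / N)"
      unfolding Wf_upd s_def[symmetric] N_def[symmetric]
      by (intro sum.cong refl) (simp add: N field_simps)
    also have "\<dots> = ?rhs"
      by (simp only: sum_subtractf sum_distrib_left[symmetric] sum_divide_distrib[symmetric])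
    finally show ?thesis .
  qed
  also have "(\<Sum>i\<in>UNIV. \<Sum>j\<in>UNIV. aa a i j * ((y j)^2 - (y i)^2)) = 0"
    by (rule antisym_sum0) (simp add: sym algebra_simps)
  also have "(\<Sum>i\<in>UNIV. \<Sum>j\<in>UNIV. aa a i j * (y j - y i)) = 0"
    by (rule antisym_sum0) (simp add: sym algebra_simps)
  finally have X: "(\<Sum>i\<in>UNIV. \<Sum>j\<in>UNIV. aa a i j * (Wf (y(i := y j)) - Wf y))
     = 0 - (2 * s / N) * 0 - (\<Sum>i\<in>UNIV. \<Sum>j\<in>UNIV. aa a i j * (y i - y j)^2) / N" .
  show ?thesis unfolding X by (simp add: Qf_def N_def)
qed

lemma monoN:
  fixes N :: "real \<Rightarrow> nat"
  assumes "mono_on {0..} N" "0 \<le> x" "x \<le> y" shows "N x \<le> N y"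
  using assms by (intro mono_onD[OF assms(1)]) auto

lemma left_lim_const:
  assumes "a < s" "\<And>u. a < u \<Longrightarrow> u < s \<Longrightarrow> f u = c"
  shows "left_lim f s = c"
proof -
  have "(f \<longlongrightarrow> c) (at_left s)"
  proof (rule tendsto_eventually)
    show "eventually (\<lambda>u. f u = c) (at_left s)"
      unfolding eventually_at_left_field using assms by blast
  qed
  then show ?thesis unfolding left_lim_def by (rule tendsto_Lim[rotated]) simp
qed

lemma left_lim_mono_nat:
  fixes N :: "real \<Rightarrow> nat"
  assumes mono: "mono_on {0..} N" and s: "0 < s" and a: "0 \<le> a" "a < s"
  shows "\<exists>v. a \<le> v \<and> v < s \<and> (\<forall>w\<in>{v..<s}. N w = N v) \<and> left_lim (\<lambda>u. real (N u)) s = real (N v)"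
proof -
  define A where "A = N ` {a..<s}"
  have Asub: "A \<subseteq> {..N s}" using mono a by (auto simp: A_def intro!: monoN[OF mono])
  have finA: "finite A" using finite_subset[OF Asub] by simp
  have Ane: "A \<noteq> {}" using a by (auto simp: A_def)
  obtain v where v: "v \<in> {a..<s}" "N v = Max A"
    using Max_in[OF finA Ane] by (auto simp: A_def)
  have const: "N w = N v" if "w \<in> {v..<s}" for w
  proof -
    have "N v \<le> N w" using that v(1) a by (intro monoN[OF mono]) auto
    moreover have "N w \<le> Max A" using that v finA by (auto simp: A_def)
    ultimately show ?thesis using v by simp
  qed
  have vs: "a \<le> v" "v < s" using v(1) by auto
  have "left_lim (\<lambda>u. real (N u)) s = real (N v)"
  proof (rule left_lim_const)
    show "v < s" by (rule vs(2))
    fix u assume "v < u" "u < s"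
    then show "real (N u) = real (N v)" using const[of u] by simp
  qed
  then show ?thesis using vs const by blast
qed

lemma clock_zero:
  fixes N :: "real \<Rightarrow> nat"
  assumes mono: "mono_on {0..} N" and a: "0 \<le> a" and eq: "N b = N a" and s: "a < s" "s \<le> b"
  shows "left_lim (\<lambda>u. real (N u)) s = real (N s)"
proof -
  have c: "N w = N a" if "a \<le> w" "w \<le> b" for w
  proof -
    have "N a \<le> N w" "N w \<le> N b" using that a by (auto intro!: monoN[OF mono])
    then show ?thesis using eq by simp
  qed
  have "left_lim (\<lambda>u. real (N u)) s = real (N a)"
  proof (rule left_lim_const[of a])
    show "a < s" by (rule s(1))
    fix u assume "a < u" "u < s"
    then have "N u = N a" using c[of u] s by simp
    then show "real (N u) = real (N a)" by simp
  qed
  moreover have "N s = N a" using c[of s] s by simp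
  ultimately show ?thesis by simp
qed

lemma clock_one:
  fixes N :: "real \<Rightarrow> nat"
  assumes mono: "mono_on {0..} N" and rc: "\<forall>t\<ge>0. continuous (at_right t) (\<lambda>s. real (N s))"
    and a: "0 \<le> a" and ab: "a \<le> b" and eq: "N b = Suc (N a)"
  shows "\<exists>s0. a < s0 \<and> s0 \<le> b \<and> (\<forall>u. a \<le> u \<longrightarrow> u < s0 \<longrightarrow> N u = N a)
           \<and> (\<forall>u. s0 \<le> u \<longrightarrow> u \<le> b \<longrightarrow> N u = Suc (N a))"
proof -
  define T where "T = {u\<in>{a..b}. N a < N u}"
  have bT: "b \<in> T" using ab eq by (simp add: T_def)
  have bdd: "bdd_below T" by (auto simp: T_def bdd_below_def)
  define s0 where "s0 = Inf T"
  have s0b: "s0 \<le> b" using cInf_lower[OF bT bdd] by (simp add: s0_def)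
  have as0: "a \<le> s0" unfolding s0_def using bT by (intro cInf_greatest) (auto simp: T_def)
  have low: "N u = N a" if "a \<le> u" "u < s0" for u
  proof -
    have "u \<notin> T"
    proof
      assume "u \<in> T" then have "s0 \<le> u" using cInf_lower[OF _ bdd] by (simp add: s0_def)
      then show False using that by simp
    qed
    moreover have "N a \<le> N u" using that a by (intro monoN[OF mono]) auto
    moreover have "u \<le> b" using that s0b by simp
    ultimately show ?thesis using that by (auto simp: T_def)
  qed
  have Ns0: "N s0 = Suc (N a)"
  proof -
    have "N s0 \<le> N b" using as0 a s0b by (intro monoN[OF mono]) auto
    moreover have "N a \<le> N s0" using as0 a by (intro monoN[OF mono]) auto
    moreover have "N s0 \<noteq> N a"
    proof
      assume Na: "N s0 = N a"
      have "((\<lambda>s. real (N s)) \<longlongrightarrow> real (N s0)) (at_right s0)"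
        using rc as0 a by (simp add: continuous_within)
      then have "eventually (\<lambda>s. real (N s) < real (N s0) + 1/2) (at_right s0)"
        by (rule order_tendstoD) simp
      then obtain d where d: "d > s0" "\<And>y. s0 < y \<Longrightarrow> y < d \<Longrightarrow> real (N y) < real (N s0) + 1/2"
        unfolding eventually_at_right_field by blast
      have "\<forall>u\<in>T. d \<le> u"
      proof
        fix u assume uT: "u \<in> T"
        have "s0 \<le> u" using cInf_lower[OF uT bdd] by (simp add: s0_def)
        show "d \<le> u"
        proof (rule ccontr)
          assume "\<not> d \<le> u"
          then have "N u = N a"
          proof (cases "u = s0")
            case False
            then have "real (N u) < real (N s0) + 1/2" using d \<open>s0 \<le> u\<close> \<open>\<not> d \<le> u\<close> by simp
            then have "N u \<le> N s0" by linarith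
            then show ?thesis using Na uT by (simp add: T_def)
          qed (use Na in simp)
          then show False using uT by (simp add: T_def)
        qed
      qed
      then have "d \<le> s0" unfolding s0_def using bT by (intro cInf_greatest) auto
      then show False using d by simp
    qed
    ultimately show ?thesis using eq by simp
  qed
  have "a \<noteq> s0" using Ns0 by auto
  then have "a < s0" using as0 by simp
  moreover have "N u = Suc (N a)" if "s0 \<le> u" "u \<le> b" for u
  proof -
    have "N s0 \<le> N u" "N u \<le> N b" using that as0 a by (auto intro!: monoN[OF mono])
    then show ?thesis using Ns0 eq by simp
  qed
  ultimately show ?thesis using s0b low by blast
qed

lemma jump_times_finite:
  fixes N :: "real \<Rightarrow> nat"
  assumes mono: "mono_on {0..} N"
  shows "finite (jump_times N u)"
proof -
  have inj: "inj_on N (jump_times N u)"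
  proof (rule inj_onI)
    fix s1 s2 assume s1: "s1 \<in> jump_times N u" and s2: "s2 \<in> jump_times N u" and eq: "N s1 = N s2"
    show "s1 = s2"
    proof (rule ccontr)
      assume ne: "s1 \<noteq> s2"
      have key: "False" if "x1 \<in> jump_times N u" "x2 \<in> jump_times N u" "x1 < x2" "N x1 = N x2" for x1 x2
      proof -
        have x: "0 < x1" "x1 < x2" "x2 \<le> u" "real (N x2) \<noteq> left_lim (\<lambda>u. real (N u)) x2"
          using that by (auto simp: jump_times_def)
        obtain v where v: "x1 \<le> v" "v < x2" "\<forall>w\<in>{v..<x2}. N w = N v" "left_lim (\<lambda>u. real (N u)) x2 = real (N v)"
        proof -
          have "0 < x2" "0 \<le> x1" using x by auto
          from left_lim_mono_nat[OF mono this x(2)] show ?thesis using that by blast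
        qed
        have "N x1 \<le> N v" using v(1) x(1) by (intro monoN[OF mono]) auto
        moreover have "N v \<le> N x2" using v(1,2) x(1) by (intro monoN[OF mono]) auto
        ultimately show False using x(4) v(4) that(4) by simp
      qed
      show False
      proof (cases "s1 < s2")
        case True then show ?thesis using key[OF s1 s2] eq by simp
      next
        case False then show ?thesis using key[OF s2 s1] eq ne by simp
      qed
    qed
  qed
  have "N ` jump_times N u \<subseteq> {..N u}"
    by (auto simp: jump_times_def intro!: monoN[OF mono])
  then have "finite (N ` jump_times N u)" using finite_subset by blast
  then show ?thesis using finite_image_iff[OF inj] by simp
qed

locale pathsys =
  fixes x :: "real \<Rightarrow> 'n::finite \<Rightarrow> real" and Nc :: "'n \<times> 'n \<Rightarrow> real \<Rightarrow> nat"
  assumes mono: "\<And>p. p \<in> off_diag \<Longrightarrow> mono_on {0..} (Nc p)"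
    and rc: "\<And>p. p \<in> off_diag \<Longrightarrow> \<forall>t\<ge>0. continuous (at_right t) (\<lambda>s. real (Nc p s))"
    and eq: "\<forall>u\<ge>0. \<forall>i. x u i = x 0 i + (\<Sum>j\<in>UNIV - {i}. \<Sum>s\<in>jump_times (\<lambda>u. Nc (i, j) u) u.
           (left_lim (\<lambda>u. x u j) s - left_lim (\<lambda>u. x u i) s) *
           (real (Nc (i, j) s) - left_lim (\<lambda>u. real (Nc (i, j) u)) s))"
begin

definition Tm :: "'n \<Rightarrow> 'n \<Rightarrow> real \<Rightarrow> real" where
  "Tm i j s = (left_lim (\<lambda>u. x u j) s - left_lim (\<lambda>u. x u i) s) *
           (real (Nc (i, j) s) - left_lim (\<lambda>u. real (Nc (i, j) u)) s)"

lemma diff: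
  assumes a: "0 \<le> a" "a \<le> u"
  shows "x u i = x a i + (\<Sum>j\<in>UNIV - {i}. \<Sum>s\<in>jump_times (Nc (i, j)) u \<inter> {a<..}. Tm i j s)"
proof -
  have split: "(\<Sum>s\<in>jump_times (Nc (i, j)) u. Tm i j s) =
      (\<Sum>s\<in>jump_times (Nc (i, j)) a. Tm i j s) + (\<Sum>s\<in>jump_times (Nc (i, j)) u \<inter> {a<..}. Tm i j s)"
    if j: "j \<in> UNIV - {i}" for j
  proof -
    have off: "(i, j) \<in> off_diag" using j by (simp add: off_diag_def)
    have fin: "finite (jump_times (Nc (i, j)) u)" by (rule jump_times_finite[OF mono[OF off]])
    have "jump_times (Nc (i, j)) u = jump_times (Nc (i, j)) a \<union> (jump_times (Nc (i, j)) u \<inter> {a<..})"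
      using a by (auto simp: jump_times_def)
    moreover have "jump_times (Nc (i, j)) a \<inter> (jump_times (Nc (i, j)) u \<inter> {a<..}) = {}"
      by (auto simp: jump_times_def)
    ultimately show ?thesis using fin
      by (metis (no_types, lifting) finite_Un sum.union_disjoint)
  qed
  have "x u i = x 0 i + (\<Sum>j\<in>UNIV - {i}. \<Sum>s\<in>jump_times (Nc (i, j)) u. Tm i j s)"
    unfolding Tm_def using eq[rule_format, of u i] a by simp
  also have "\<dots> = x 0 i + (\<Sum>j\<in>UNIV - {i}. \<Sum>s\<in>jump_times (Nc (i, j)) a. Tm i j s)
      + (\<Sum>j\<in>UNIV - {i}. \<Sum>s\<in>jump_times (Nc (i, j)) u \<inter> {a<..}. Tm i j s)"
    by (simp add: split sum.distrib)
  also have "x 0 i + (\<Sum>j\<in>UNIV - {i}. \<Sum>s\<in>jump_times (Nc (i, j)) a. Tm i j s) = x a i"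
    unfolding Tm_def using eq[rule_format, of a i] a by simp
  finally show ?thesis .
qed

lemma no_jumps:
  assumes p: "p \<in> off_diag" and a: "0 \<le> a" and e: "Nc p b = Nc p a"
  shows "jump_times (Nc p) u \<inter> {a<..} \<inter> {..b} = {}"
  using clock_zero[OF mono[OF p] a e] by (auto simp: jump_times_def)

lemma step_zero:
  assumes a: "0 \<le> a" "a \<le> u" "u \<le> b" and e: "\<And>p. p \<in> off_diag \<Longrightarrow> Nc p b = Nc p a"
  shows "x u = x a"
proof
  fix i
  have "\<And>j. j \<in> UNIV - {i} \<Longrightarrow> jump_times (Nc (i, j)) u \<inter> {a<..} = {}"
  proof -
    fix j assume "j \<in> UNIV - {i}"
    then have off: "(i, j) \<in> off_diag" by (simp add: off_diag_def)
    show "jump_times (Nc (i, j)) u \<inter> {a<..} = {}"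
      using no_jumps[OF off a(1) e[OF off], of u] a by (auto simp: jump_times_def)
  qed
  then show "x u i = x a i" using diff[OF a(1,2), of i] by simp
qed

lemma step_one:
  assumes a: "0 \<le> a" "a \<le> b" and p0: "(i0, j0) \<in> off_diag"
    and e1: "Nc (i0, j0) b = Suc (Nc (i0, j0) a)"
    and e: "\<And>p. p \<in> off_diag \<Longrightarrow> p \<noteq> (i0, j0) \<Longrightarrow> Nc p b = Nc p a"
  shows "x b = (x a)(i0 := x a j0)"
proof -
  obtain s0 where s0: "a < s0" "s0 \<le> b" "\<And>u. a \<le> u \<Longrightarrow> u < s0 \<Longrightarrow> Nc (i0, j0) u = Nc (i0, j0) a"
     "\<And>u. s0 \<le> u \<Longrightarrow> u \<le> b \<Longrightarrow> Nc (i0, j0) u = Suc (Nc (i0, j0) a)"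
    using clock_one[OF mono[OF p0] rc[OF p0] a e1] by blast
  have jt0: "jump_times (Nc (i0, j0)) u \<inter> {a<..} = (if s0 \<le> u then {s0} else {})" if u: "u \<le> b" for u
  proof -
    have "s \<in> jump_times (Nc (i0, j0)) u \<longleftrightarrow> s = s0 \<and> s0 \<le> u" if s: "a < s" "s \<le> u" for s
    proof -
      have "0 < s" using s a by simp
      consider "s < s0" | "s = s0" | "s0 < s" by linarith
      then show ?thesis
      proof cases
        case 1
        have "left_lim (\<lambda>u. real (Nc (i0, j0) u)) s = real (Nc (i0, j0) a)"
        proof (rule left_lim_const[OF s(1)])
          fix v assume "a < v" "v < s"
          then have "Nc (i0, j0) v = Nc (i0, j0) a" using 1 by (intro s0(3)) auto
          then show "real (Nc (i0, j0) v) = real (Nc (i0, j0) a)" by simp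
        qed
        then show ?thesis using s0(3)[of s] s 1 by (auto simp: jump_times_def)
      next
        case 2
        have "left_lim (\<lambda>u. real (Nc (i0, j0) u)) s = real (Nc (i0, j0) a)"
        proof (rule left_lim_const[OF s(1)])
          fix v assume "a < v" "v < s"
          then have "Nc (i0, j0) v = Nc (i0, j0) a" using 2 by (intro s0(3)) auto
          then show "real (Nc (i0, j0) v) = real (Nc (i0, j0) a)" by simp
        qed
        then show ?thesis using s0(4)[of s] s 2 u \<open>0 < s\<close> by (auto simp: jump_times_def)
      next
        case 3
        have "left_lim (\<lambda>u. real (Nc (i0, j0) u)) s = real (Suc (Nc (i0, j0) a))"
        proof (rule left_lim_const[OF 3])
          fix v assume "s0 < v" "v < s"
          then have "Nc (i0, j0) v = Suc (Nc (i0, j0) a)" using s u by (intro s0(4)) auto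
          then show "real (Nc (i0, j0) v) = real (Suc (Nc (i0, j0) a))" by simp
        qed
        then show ?thesis using s0(4)[of s] s 3 u by (auto simp: jump_times_def)
      qed
    qed
    note iff = this
    have mem: "s \<in> jump_times (Nc (i0, j0)) u \<inter> {a<..} \<longleftrightarrow> s = s0 \<and> s0 \<le> u" for s
    proof (cases "a < s \<and> s \<le> u")
      case True
      then show ?thesis using iff[of s] by simp
    next
      case False
      have "s \<notin> jump_times (Nc (i0, j0)) u \<inter> {a<..}" using False by (auto simp: jump_times_def)
      moreover have "\<not> (s = s0 \<and> s0 \<le> u)" using False s0(1) by auto
      ultimately show ?thesis by blast
    qed
    show ?thesis
    proof (rule set_eqI)
      fix s show "s \<in> jump_times (Nc (i0, j0)) u \<inter> {a<..} \<longleftrightarrow> s \<in> (if s0 \<le> u then {s0} else {})"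
        using mem[of s] by auto
    qed
  qed
  have others: "jump_times (Nc (i, j)) u \<inter> {a<..} = {}"
    if "(i, j) \<in> off_diag" "(i, j) \<noteq> (i0, j0)" "u \<le> b" for i j u
    using no_jumps[OF that(1) a(1) e[OF that(1,2)], of u] that by (auto simp: jump_times_def)
  have before: "x u = x a" if u: "a \<le> u" "u < s0" for u
  proof
    fix i
    have "\<And>j. j \<in> UNIV - {i} \<Longrightarrow> jump_times (Nc (i, j)) u \<inter> {a<..} = {}"
    proof -
      fix j assume "j \<in> UNIV - {i}"
      then have off: "(i, j) \<in> off_diag" by (simp add: off_diag_def)
      show "jump_times (Nc (i, j)) u \<inter> {a<..} = {}"
      proof (cases "(i, j) = (i0, j0)")
        case True then show ?thesis using jt0[of u] u(2) s0(2) by auto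
      next
        case False then show ?thesis using others[OF off False, of u] u(2) s0(2) by auto
      qed
    qed
    then show "x u i = x a i" using diff[OF a(1) u(1), of i] by simp
  qed
  have llx: "left_lim (\<lambda>u. x u k) s0 = x a k" for k
  proof (rule left_lim_const[OF s0(1)])
    fix v assume "a < v" "v < s0"
    then have "x v = x a" by (intro before) auto
    then show "x v k = x a k" by simp
  qed
  have llN: "left_lim (\<lambda>u. real (Nc (i0, j0) u)) s0 = real (Nc (i0, j0) a)"
  proof (rule left_lim_const[OF s0(1)])
    fix v assume "a < v" "v < s0"
    then have "Nc (i0, j0) v = Nc (i0, j0) a" by (intro s0(3)) auto
    then show "real (Nc (i0, j0) v) = real (Nc (i0, j0) a)" by simp
  qed
  show ?thesis
  proof
    fix i
    show "x b i = ((x a)(i0 := x a j0)) i"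
    proof (cases "i = i0")
      case False
      have "\<And>j. j \<in> UNIV - {i} \<Longrightarrow> jump_times (Nc (i, j)) b \<inter> {a<..} = {}"
        using others False by (auto simp: off_diag_def)
      then show ?thesis using diff[OF a, of i] False by simp
    next
      case True
      have ij: "i0 \<noteq> j0" using p0 by (simp add: off_diag_def)
      have z: "(\<Sum>s\<in>jump_times (Nc (i0, j)) b \<inter> {a<..}. Tm i0 j s) = 0" if "j \<in> UNIV - {i0} - {j0}" for j
      proof -
        have "jump_times (Nc (i0, j)) b \<inter> {a<..} = {}"
          by (rule others) (use that in \<open>auto simp: off_diag_def\<close>)
        then show ?thesis by simp
      qed
      have "(\<Sum>j\<in>UNIV - {i0}. \<Sum>s\<in>jump_times (Nc (i0, j)) b \<inter> {a<..}. Tm i0 j s)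
          = (\<Sum>s\<in>jump_times (Nc (i0, j0)) b \<inter> {a<..}. Tm i0 j0 s)
            + (\<Sum>j\<in>UNIV - {i0} - {j0}. \<Sum>s\<in>jump_times (Nc (i0, j)) b \<inter> {a<..}. Tm i0 j s)"
        using ij by (subst sum.remove[of _ j0]) auto
      also have "\<dots> = Tm i0 j0 s0" using jt0[of b] s0(2) z by simp
      also have "\<dots> = x a j0 - x a i0"
        using s0(4)[of s0] s0(2) by (simp add: Tm_def llx llN)
      finally show ?thesis using diff[OF a, of i0] True by simp
    qed
  qed
qed

end

lemma preimage_Int_stable: "Int_stable {X -` A \<inter> space M | A. A \<in> sets N}"
  unfolding Int_stable_def
proof (intro ballI)
  fix a b assume "a \<in> {X -` A \<inter> space M | A. A \<in> sets N}" "b \<in> {X -` A \<inter> space M | A. A \<in> sets N}"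
  then obtain A B where "a = X -` A \<inter> space M" "A \<in> sets N" "b = X -` B \<inter> space M" "B \<in> sets N" by blast
  then show "a \<inter> b \<in> {X -` A \<inter> space M | A. A \<in> sets N}"
    by (intro CollectI exI[of _ "A \<inter> B"]) auto
qed

lemma (in prob_space) indep_factor:
  fixes Fam :: "'i \<Rightarrow> 'a set set"
  assumes ind: "indep_sets Fam (K1 \<union> K2)" and disj: "K1 \<inter> K2 = {}"
    and stab: "\<And>i. i \<in> K1 \<union> K2 \<Longrightarrow> Int_stable (Fam i)"
    and f: "f \<in> borel_measurable (sigma (space M) (\<Union>i\<in>K1. Fam i))" and fnn: "\<And>\<omega>. 0 \<le> f \<omega>"
    and B: "B \<in> sigma_sets (space M) (\<Union>i\<in>K2. Fam i)"
  shows "(\<integral>\<^sup>+\<omega>. ennreal (f \<omega>) * indicator B \<omega> \<partial>M) = (\<integral>\<^sup>+\<omega>. ennreal (f \<omega>) \<partial>M) * emeasure M B"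
proof -
  have ev: "\<And>i. i \<in> K1 \<union> K2 \<Longrightarrow> Fam i \<subseteq> events" using ind by (simp add: indep_sets_def)
  have G1: "(\<Union>i\<in>K1. Fam i) \<subseteq> events" and G2: "(\<Union>i\<in>K2. Fam i) \<subseteq> events" using ev by auto
  have G1p: "(\<Union>i\<in>K1. Fam i) \<subseteq> Pow (space M)" using G1 sets.sets_into_space by blast
  have S1: "sigma_sets (space M) (\<Union>i\<in>K1. Fam i) \<subseteq> events" by (rule sets.sigma_sets_subset[OF G1])
  have S2: "sigma_sets (space M) (\<Union>i\<in>K2. Fam i) \<subseteq> events" by (rule sets.sigma_sets_subset[OF G2])
  have coll: "indep_sets (\<lambda>b. sigma_sets (space M) (\<Union>i\<in>(if b then K1 else K2). Fam i)) UNIV"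
  proof (rule indep_sets_collect_sigma)
    have "(\<Union>j\<in>UNIV. if j then K1 else K2) = K1 \<union> K2" by (auto simp: UNIV_bool)
    then show "indep_sets Fam (\<Union>j\<in>UNIV. if j then K1 else K2)" using ind by simp
  next
    fix i j assume "j \<in> (UNIV::bool set)" "i \<in> (if j then K1 else K2)"
    then show "Int_stable (Fam i)" using stab by (cases j) auto
  next
    show "disjoint_family_on (\<lambda>b. if b then K1 else K2) UNIV"
      using disj by (auto simp: disjoint_family_on_def)
  qed
  define X where "X b = (if b then (\<lambda>\<omega>. ennreal (f \<omega>)) else (\<lambda>\<omega>. indicator B \<omega> :: ennreal))" for b
  have fE: "(\<lambda>\<omega>. ennreal (f \<omega>)) \<in> borel_measurable (sigma (space M) (\<Union>i\<in>K1. Fam i))"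
    using f by measurable
  have fM: "f \<in> borel_measurable M"
    using f measurable_mono[of borel borel "sigma (space M) (\<Union>i\<in>K1. Fam i)" M] S1 G1p by auto
  have BM: "B \<in> events" using B S2 by auto
  have indep: "indep_vars (\<lambda>_. borel) X UNIV"
    unfolding indep_vars_def2
  proof
    show "\<forall>i\<in>UNIV. random_variable borel (X i)"
      using fM BM by (auto simp: X_def)
    show "indep_sets (\<lambda>i. {X i -` A \<inter> space M |A. A \<in> sets borel}) UNIV"
    proof (rule indep_sets_mono_sets[OF coll])
      fix b :: bool
      show "{X b -` A \<inter> space M |A. A \<in> sets borel} \<subseteq> sigma_sets (space M) (\<Union>i\<in>(if b then K1 else K2). Fam i)"
      proof (cases b)
        case True
        have "(\<lambda>\<omega>. ennreal (f \<omega>)) -` A \<inter> space M \<in> sigma_sets (space M) (\<Union>i\<in>K1. Fam i)" if "A \<in> sets borel" for A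
          using measurable_sets[OF fE that] G1p by simp
        then show ?thesis using True by (auto simp: X_def)
      next
        case False
        have Bs: "B \<subseteq> space M" using BM sets.sets_into_space by blast
        have "indicator B -` A \<inter> space M \<in> sigma_sets (space M) (\<Union>i\<in>K2. Fam i)" for A :: "ennreal set"
        proof -
          have eq: "(\<lambda>\<omega>. indicator B \<omega> :: ennreal) -` A \<inter> space M
              = (if (1::ennreal) \<in> A then B else {}) \<union> (if (0::ennreal) \<in> A then space M - B else {})"
            using Bs by (auto simp: indicator_def of_bool_def split: if_splits)
          have "B \<in> sigma_sets (space M) (\<Union>i\<in>K2. Fam i)" by (rule B)
          moreover have "space M - B \<in> sigma_sets (space M) (\<Union>i\<in>K2. Fam i)"
            using B by (rule sigma_sets.Compl)
          moreover have "{} \<in> sigma_sets (space M) (\<Union>i\<in>K2. Fam i)" by (rule sigma_sets.Empty)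
          moreover have "space M \<in> sigma_sets (space M) (\<Union>i\<in>K2. Fam i)" by (rule sigma_sets_top)
          moreover have "B \<union> (space M - B) = space M" using Bs by auto
          ultimately show ?thesis unfolding eq by (auto intro!: sigma_sets_Un)
        qed
        then show ?thesis using False by (auto simp: X_def)
      qed
    qed
  qed
  have nn: "\<And>i \<omega>. i \<in> UNIV \<Longrightarrow> 0 \<le> X i \<omega>" by simp
  have "(\<integral>\<^sup>+\<omega>. (\<Prod>i\<in>UNIV. X i \<omega>) \<partial>M) = (\<Prod>i\<in>UNIV. \<integral>\<^sup>+\<omega>. X i \<omega> \<partial>M)"
    by (rule indep_vars_nn_integral) (use indep nn in auto)
  moreover have "(\<Prod>i\<in>UNIV. X i \<omega>) = ennreal (f \<omega>) * indicator B \<omega>" for \<omega>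
    by (simp add: UNIV_bool X_def mult.commute)
  moreover have "(\<Prod>i\<in>UNIV. \<integral>\<^sup>+\<omega>. X i \<omega> \<partial>M) = (\<integral>\<^sup>+\<omega>. ennreal (f \<omega>) \<partial>M) * emeasure M B"
    using BM by (simp add: UNIV_bool X_def mult.commute)
  ultimately show ?thesis by simp
qed

locale cmodel = prob_space M for M :: "'a measure" +
  fixes a :: "'n::finite \<Rightarrow> 'n \<Rightarrow> real" and Np :: "'n \<times> 'n \<Rightarrow> real \<Rightarrow> 'a \<Rightarrow> nat"
    and S :: "real \<Rightarrow> 'a \<Rightarrow> 'n \<Rightarrow> real" and t :: real
  assumes nonneg: "\<And>i j. i \<noteq> j \<Longrightarrow> 0 \<le> a i j"
    and symm: "\<And>i j. i \<noteq> j \<Longrightarrow> a i j = a j i"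
    and clocks: "poisson_clocks M a Np S"
    and sol: "consensus_solution M Np S"
    and tpos: "0 < t"
    and card2: "2 \<le> CARD('n)"
begin

definition grid :: "nat \<Rightarrow> nat \<Rightarrow> real" where "grid n k = real k * t / real n"

definition inc :: "nat \<Rightarrow> 'n \<times> 'n \<Rightarrow> nat \<Rightarrow> 'a \<Rightarrow> nat" where
  "inc n q k = (\<lambda>\<omega>. Np q (grid n (Suc k)) \<omega> - Np q (grid n k) \<omega>)"

definition cyl :: "nat \<Rightarrow> nat \<Rightarrow> ('n \<times> 'n \<Rightarrow> nat) \<Rightarrow> 'a set" where
  "cyl n k d = (\<Inter>q\<in>off_diag. inc n q k -` {d q} \<inter> space M)"

definition Ep :: "nat \<Rightarrow> 'n \<times> 'n \<Rightarrow> nat \<Rightarrow> 'a set" where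
  "Ep n p k = cyl n k (\<lambda>q. if q = p then 1 else 0)"

definition E0 :: "nat \<Rightarrow> nat \<Rightarrow> 'a set" where
  "E0 n k = cyl n k (\<lambda>q. 0)"

definition ar :: "'n \<times> 'n \<Rightarrow> real" where "ar q = (case q of (i, j) \<Rightarrow> a i j)"

definition Atot :: real where "Atot = (\<Sum>q\<in>off_diag. ar q)"

definition Fam :: "nat \<Rightarrow> (('n \<times> 'n) \<times> nat) option \<Rightarrow> 'a set set" where
  "Fam n = (\<lambda>x. case x of
               None \<Rightarrow> {(\<lambda>\<omega>. S 0 \<omega>) -` A \<inter> space M | A. A \<in> sets (Pi\<^sub>M UNIV (\<lambda>_. borel))}
             | Some (p, m) \<Rightarrow> {(\<lambda>\<omega>. Np p (grid n (Suc m)) \<omega> - Np p (grid n m) \<omega>) -` A \<inter> space M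
                                  | A. A \<in> sets (count_space UNIV)})"

lemma off_ne: "off_diag \<noteq> ({} :: ('n \<times> 'n) set)"
proof -
  have "\<not> (\<forall>i j::'n. i = j)"
  proof
    assume "\<forall>i j::'n. i = j"
    then have "(UNIV::'n set) \<subseteq> {undefined}" by auto
    then have "CARD('n) \<le> 1" using card_mono[of "{undefined}" UNIV] by simp
    then show False using card2 by simp
  qed
  then show ?thesis by (auto simp: off_diag_def)
qed

lemma fin_off: "finite (off_diag :: ('n \<times> 'n) set)" by simp

lemma ar_nonneg: "q \<in> off_diag \<Longrightarrow> 0 \<le> ar q"
  by (auto simp: ar_def off_diag_def nonneg)

lemma grid0: "grid n 0 = 0" by (simp add: grid_def)

lemma grid_mono: "grid n k \<le> grid n (Suc k)"
  using tpos by (simp add: grid_def divide_right_mono)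

lemma grid_nonneg: "0 \<le> grid n k"
  using tpos by (simp add: grid_def)

lemma grid_step: "0 < n \<Longrightarrow> grid n (Suc k) - grid n k = t / real n"
  by (simp add: grid_def field_simps)

lemma indepF: "indep_sets (Fam n) (insert None (Some ` (off_diag \<times> {..<K})))"
proof -
  have "\<forall>(tt :: nat \<Rightarrow> real) k. tt 0 = 0 \<and> (\<forall>m<k. tt m \<le> tt (Suc m)) \<longrightarrow>
        prob_space.indep_sets M
          (\<lambda>x. case x of
               None \<Rightarrow> {(\<lambda>\<omega>. S 0 \<omega>) -` A \<inter> space M | A. A \<in> sets (Pi\<^sub>M UNIV (\<lambda>_. borel))}
             | Some (p, m) \<Rightarrow> {(\<lambda>\<omega>. Np p (tt (Suc m)) \<omega> - Np p (tt m) \<omega>) -` A \<inter> space M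
                                  | A. A \<in> sets (count_space UNIV)})
          (insert None (Some ` (off_diag \<times> {..<k})))"
    using clocks unfolding poisson_clocks_def by blast
  moreover have pre: "grid n 0 = 0 \<and> (\<forall>m<K. grid n m \<le> grid n (Suc m))"
    using grid0 grid_mono by blast
  ultimately show ?thesis unfolding Fam_def by blast
qed

lemma Fam_events: "i \<in> insert None (Some ` (off_diag \<times> {..<K})) \<Longrightarrow> Fam n i \<subseteq> events"
proof -
  assume i: "i \<in> insert None (Some ` (off_diag \<times> {..<K}))"
  have "\<forall>i\<in>insert None (Some ` (off_diag \<times> {..<K})). Fam n i \<subseteq> events"
    using indepF[of n K] unfolding indep_sets_def by (rule conjunct1)
  then show ?thesis using i by blast
qed

lemma Fam_stable: "Int_stable (Fam n i)"
proof (cases i)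
  case None then show ?thesis by (simp only: Fam_def option.case) (rule preimage_Int_stable)
next
  case (Some x)
  then obtain p m where "i = Some (p, m)" by (cases x) auto
  then show ?thesis by (simp only: Fam_def option.case prod.case) (rule preimage_Int_stable)
qed

lemma inc_in_Fam: "inc n q k -` A \<inter> space M \<in> Fam n (Some (q, k))"
  by (auto simp: Fam_def inc_def)

lemma inc_event: "q \<in> off_diag \<Longrightarrow> inc n q k -` A \<inter> space M \<in> events"
  using Fam_events[of "Some (q, k)" "Suc k" n] inc_in_Fam[of n q k A] by auto

lemma cyl_event: "cyl n k d \<in> events"
  unfolding cyl_def using off_ne by (intro sets.finite_INT fin_off inc_event) auto

lemma cyl_iff: "\<omega> \<in> cyl n k d \<longleftrightarrow> \<omega> \<in> space M \<and> (\<forall>q\<in>off_diag. inc n q k \<omega> = d q)"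
  using off_ne by (auto simp: cyl_def)

lemma pois:
  assumes q: "q \<in> off_diag" and n: "0 < n"
  shows "prob (inc n q k -` {m} \<inter> space M) = (ar q * (t / n)) ^ m / fact m * exp (- (ar q * (t / n)))"
proof -
  have "\<forall>p\<in>off_diag. \<forall>s t k. 0 \<le> s \<longrightarrow> s \<le> t \<longrightarrow>
        measure M {\<omega>\<in>space M. Np p t \<omega> - Np p s \<omega> = k}
          = (case p of (i, j) \<Rightarrow> (a i j * (t - s)) ^ k / fact k * exp (- (a i j * (t - s))))"
    using clocks unfolding poisson_clocks_def by blast
  from this[rule_format, OF q, of "grid n k" "grid n (Suc k)" m]
  have "measure M {\<omega>\<in>space M. inc n q k \<omega> = m} = (ar q * (t / n)) ^ m / fact m * exp (- (ar q * (t / n)))"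
    using grid_nonneg grid_mono grid_step[OF n] by (simp add: inc_def ar_def split: prod.splits)
  moreover have "{\<omega>\<in>space M. inc n q k \<omega> = m} = inc n q k -` {m} \<inter> space M" by auto
  ultimately show ?thesis by simp
qed

lemma prob_cyl:
  assumes n: "0 < n"
  shows "prob (cyl n k d) = (\<Prod>q\<in>off_diag. (ar q * (t / n)) ^ d q / fact (d q) * exp (- (ar q * (t / n))))"
proof -
  define J where "J = (\<lambda>q::'n\<times>'n. Some (q, k)) ` off_diag"
  define A where "A x = (case x of Some (q, _) \<Rightarrow> inc n q k -` {d q} \<inter> space M | None \<Rightarrow> {})" for x :: "(('n \<times> 'n) \<times> nat) option"
  have J: "J \<subseteq> insert None (Some ` (off_diag \<times> {..<Suc k}))" "J \<noteq> {}" "finite J"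
    using off_ne by (auto simp: J_def)
  have AJ: "\<forall>j\<in>J. A j \<in> Fam n j" by (auto simp: J_def A_def inc_in_Fam)
  have "prob (\<Inter>j\<in>J. A j) = (\<Prod>j\<in>J. prob (A j))"
    by (rule indep_setsD[OF indepF J AJ])
  moreover have "(\<Inter>j\<in>J. A j) = cyl n k d" by (simp add: J_def A_def cyl_def)
  moreover have "(\<Prod>j\<in>J. prob (A j)) = (\<Prod>q\<in>off_diag. prob (inc n q k -` {d q} \<inter> space M))"
    unfolding J_def by (subst prod.reindex) (auto simp: inj_on_def A_def)
  ultimately show ?thesis using pois[OF _ n] by simp
qed

lemma exp_prod: "(\<Prod>q\<in>off_diag. exp (- (ar q * c))) = exp (- (Atot * c))"
proof -
  have "(\<Prod>q\<in>off_diag. exp (- (ar q * c))) = exp (\<Sum>q\<in>off_diag. - (ar q * c))"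
    by (rule exp_sum[symmetric, OF fin_off])
  also have "(\<Sum>q\<in>off_diag. - (ar q * c)) = - (Atot * c)"
    using fin_off by (simp add: Atot_def sum_negf sum_distrib_right)
  finally show ?thesis .
qed

lemma prob_E0:
  assumes n: "0 < n" shows "prob (E0 n k) = exp (- (Atot * (t / n)))"
proof -
  have "prob (E0 n k) = (\<Prod>q\<in>off_diag. exp (- (ar q * (t / n))))"
    unfolding E0_def prob_cyl[OF n] by (intro prod.cong refl) simp
  also have "\<dots> = exp (- (Atot * (t / n)))" by (rule exp_prod)
  finally show ?thesis .
qed

lemma prob_Ep:
  assumes n: "0 < n" and p: "p \<in> off_diag"
  shows "prob (Ep n p k) = ar p * (t / n) * exp (- (Atot * (t / n)))"
proof -
  have "prob (Ep n p k) = (\<Prod>q\<in>off_diag. (if q = p then ar q * (t / n) else 1) * exp (- (ar q * (t / n))))"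
    unfolding Ep_def prob_cyl[OF n] by (intro prod.cong refl) auto
  also have "\<dots> = (\<Prod>q\<in>off_diag. (if q = p then ar q * (t / n) else 1)) * exp (- (Atot * (t / n)))"
    by (simp only: prod.distrib exp_prod)
  also have "(\<Prod>q\<in>off_diag. (if q = p then ar q * (t / n) else 1)) = ar p * (t / n)"
    using p by (simp add: prod.delta)
  finally show ?thesis .
qed

lemma Ep_event: "Ep n p k \<in> events" by (simp add: Ep_def cyl_event)
lemma E0_event: "E0 n k \<in> events" by (simp add: E0_def cyl_event)

lemma Ep_disj:
  assumes "p \<in> off_diag" "p' \<in> off_diag" "p \<noteq> p'" shows "Ep n p k \<inter> Ep n p' k = {}"
proof -
  have False if "x \<in> Ep n p k" "x \<in> Ep n p' k" for x
  proof -
    have "inc n p k x = 1" using that(1) assms(1) by (auto simp: Ep_def cyl_iff)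
    moreover have "inc n p k x = 0" using that(2) assms by (auto simp: Ep_def cyl_iff)
    ultimately show False by simp
  qed
  then show ?thesis by blast
qed

lemma E0_Ep_disj:
  assumes "p \<in> off_diag" shows "E0 n k \<inter> Ep n p k = {}"
proof -
  have False if "x \<in> E0 n k" "x \<in> Ep n p k" for x
  proof -
    have "inc n p k x = 1" using that(2) assms(1) by (auto simp: Ep_def cyl_iff)
    moreover have "inc n p k x = 0" using that(1) assms by (auto simp: E0_def cyl_iff)
    ultimately show False by simp
  qed
  then show ?thesis by blast
qed

end

context cmodel begin

definition good :: "nat \<Rightarrow> nat \<Rightarrow> 'a set" where
  "good n k = E0 n k \<union> (\<Union>p\<in>off_diag. Ep n p k)"

definition G :: "nat \<Rightarrow> 'a set" where
  "G n = {\<omega>\<in>space M. \<forall>k<n. \<omega> \<in> good n k}"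

lemma good_event: "good n k \<in> events"
  unfolding good_def using fin_off by (intro sets.Un E0_event sets.finite_UN Ep_event) auto

lemma G_event: "G n \<in> events"
proof -
  have "G n = space M \<inter> (\<Inter>k\<in>{..<n}. good n k)" by (auto simp: G_def)
  then show ?thesis using good_event by (auto intro!: sets.Int sets.countable_INT')
qed

lemma Atot_nonneg: "0 \<le> Atot"
  unfolding Atot_def by (intro sum_nonneg ar_nonneg)

lemma exp_bound: fixes y :: real assumes "0 \<le> y" shows "1 - exp (- y) * (1 + y) \<le> y^2"
proof -
  have "1 - y \<le> exp (- y)" using exp_ge_add_one_self[of "- y"] by simp
  then have "(1 - y) * (1 + y) \<le> exp (- y) * (1 + y)" using assms by (intro mult_right_mono) auto
  then show ?thesis by (simp add: power2_eq_square algebra_simps)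
qed

lemma prob_good:
  assumes n: "0 < n"
  shows "prob (good n k) = exp (- (Atot * (t / n))) * (1 + Atot * (t / n))"
proof -
  have disj: "E0 n k \<inter> (\<Union>p\<in>off_diag. Ep n p k) = {}" using E0_Ep_disj[of _ n k] by blast
  have "prob (good n k) = prob (E0 n k) + prob (\<Union>p\<in>off_diag. Ep n p k)"
    unfolding good_def using disj fin_off
    by (intro finite_measure_Union E0_event sets.finite_UN Ep_event) auto
  also have "prob (\<Union>p\<in>off_diag. Ep n p k) = (\<Sum>p\<in>off_diag. prob (Ep n p k))"
    using fin_off Ep_disj
    by (intro finite_measure_finite_Union) (auto simp: disjoint_family_on_def Ep_event)
  also have "\<dots> = (\<Sum>p\<in>off_diag. ar p * (t / n) * exp (- (Atot * (t / n))))"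
    using prob_Ep[OF n] by simp
  also have "\<dots> = Atot * (t / n) * exp (- (Atot * (t / n)))"
    by (simp only: Atot_def sum_distrib_right)
  finally show ?thesis using prob_E0[OF n] by (simp add: algebra_simps)
qed

lemma prob_bad:
  assumes n: "0 < n"
  shows "prob (space M - good n k) \<le> (Atot * (t / n))^2"
proof -
  have "prob (space M - good n k) = 1 - prob (good n k)" by (rule prob_compl[OF good_event])
  also have "\<dots> \<le> (Atot * (t / n))^2"
    unfolding prob_good[OF n] using Atot_nonneg tpos by (intro exp_bound) simp
  finally show ?thesis .
qed

lemma prob_notG:
  assumes n: "0 < n"
  shows "prob (space M - G n) \<le> real n * (Atot * (t / n))^2"
proof -
  have eq: "space M - G n = (\<Union>k\<in>{..<n}. space M - good n k)" by (auto simp: G_def)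
  have "prob (\<Union>k\<in>{..<n}. space M - good n k) \<le> (\<Sum>k\<in>{..<n}. prob (space M - good n k))"
    using good_event by (intro finite_measure_subadditive_finite) auto
  then have "prob (space M - G n) \<le> (\<Sum>k\<in>{..<n}. prob (space M - good n k))"
    by (simp only: eq)
  also have "\<dots> \<le> (\<Sum>k\<in>{..<n}. (Atot * (t / n))^2)"
    by (intro sum_mono prob_bad[OF n])
  finally show ?thesis by simp
qed

primrec Yd :: "nat \<Rightarrow> nat \<Rightarrow> 'a \<Rightarrow> 'n \<Rightarrow> real" where
  "Yd n 0 = S 0"
| "Yd n (Suc k) = (\<lambda>\<omega> i. Yd n k \<omega> i + (\<Sum>j\<in>UNIV - {i}. indicator (Ep n (i, j) k) \<omega> * (Yd n k \<omega> j - Yd n k \<omega> i)))"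

lemma Yd_Ep:
  assumes p0: "(i0, j0) \<in> off_diag" and w: "\<omega> \<in> Ep n (i0, j0) k"
  shows "Yd n (Suc k) \<omega> = (Yd n k \<omega>)(i0 := Yd n k \<omega> j0)"
proof
  fix i
  have ind: "indicator (Ep n (i, j) k) \<omega> = (if (i, j) = (i0, j0) then 1 else (0::real))" if "j \<in> UNIV - {i}" for j
  proof (cases "(i, j) = (i0, j0)")
    case True then show ?thesis using w by simp
  next
    case False
    have "(i, j) \<in> off_diag" using that by (simp add: off_diag_def)
    then have "\<omega> \<notin> Ep n (i, j) k" using Ep_disj[OF p0 _ False[symmetric], of n k] w by blast
    then show ?thesis using False by simp
  qed
  have "(\<Sum>j\<in>UNIV - {i}. indicator (Ep n (i, j) k) \<omega> * (Yd n k \<omega> j - Yd n k \<omega> i))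
      = (\<Sum>j\<in>UNIV - {i}. (if (i, j) = (i0, j0) then Yd n k \<omega> j - Yd n k \<omega> i else 0))"
    by (intro sum.cong refl) (simp add: ind)
  also have "\<dots> = (if i = i0 then Yd n k \<omega> j0 - Yd n k \<omega> i0 else 0)"
    using p0 by (auto simp: off_diag_def sum.delta' intro: sum.neutral)
  finally show "Yd n (Suc k) \<omega> i = ((Yd n k \<omega>)(i0 := Yd n k \<omega> j0)) i" by simp
qed

lemma Yd_noEp:
  assumes w: "\<omega> \<notin> (\<Union>p\<in>off_diag. Ep n p k)"
  shows "Yd n (Suc k) \<omega> = Yd n k \<omega>"
proof
  fix i
  have z: "indicator (Ep n (i, j) k) \<omega> = (0::real)" if "j \<in> UNIV - {i}" for j
  proof -
    have "(i, j) \<in> off_diag" using that by (simp add: off_diag_def)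
    then show ?thesis using w by auto
  qed
  have "(\<Sum>j\<in>UNIV - {i}. indicator (Ep n (i, j) k) \<omega> * (Yd n k \<omega> j - Yd n k \<omega> i)) = 0"
    by (rule sum.neutral) (simp add: z)
  then show "Yd n (Suc k) \<omega> i = Yd n k \<omega> i" by simp
qed

end

context cmodel begin

lemma clk: "p \<in> off_diag \<Longrightarrow> \<omega> \<in> space M \<Longrightarrow> Np p 0 \<omega> = 0 \<and> mono_on {0..} (\<lambda>t. Np p t \<omega>) \<and>
        (\<forall>t\<ge>0. continuous (at_right t) (\<lambda>s. real (Np p s \<omega>)))"
  using clocks unfolding poisson_clocks_def by blast

lemma Npmono: "p \<in> off_diag \<Longrightarrow> \<omega> \<in> space M \<Longrightarrow> 0 \<le> x \<Longrightarrow> x \<le> y \<Longrightarrow> Np p x \<omega> \<le> Np p y \<omega>"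
  using clk[of p \<omega>] monoN[of "\<lambda>t. Np p t \<omega>" x y] by blast

lemma coupling:
  assumes n: "0 < n" and w: "\<omega> \<in> space M" "\<omega> \<in> G n"
    and eqw: "\<forall>u\<ge>0. \<forall>i. S u \<omega> i = S 0 \<omega> i + (\<Sum>j\<in>UNIV - {i}. \<Sum>s\<in>jump_times (\<lambda>u. Np (i, j) u \<omega>) u.
           (left_lim (\<lambda>u. S u \<omega> j) s - left_lim (\<lambda>u. S u \<omega> i) s) *
           (real (Np (i, j) s \<omega>) - left_lim (\<lambda>u. real (Np (i, j) u \<omega>)) s))"
  shows "S t \<omega> = Yd n n \<omega>"
proof -
  interpret ps: pathsys "\<lambda>u. S u \<omega>" "\<lambda>p u. Np p u \<omega>"
  proof
    fix p :: "'n \<times> 'n" assume p: "p \<in> off_diag"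
    show "mono_on {0..} (\<lambda>u. Np p u \<omega>)" using clk[OF p w(1)] by blast
    show "\<forall>t\<ge>0. continuous (at_right t) (\<lambda>s. real (Np p s \<omega>))" using clk[OF p w(1)] by blast
  next
    show "\<forall>u\<ge>0. \<forall>i. S u \<omega> i = S 0 \<omega> i + (\<Sum>j\<in>UNIV - {i}. \<Sum>s\<in>jump_times (\<lambda>u. Np (i, j) u \<omega>) u.
           (left_lim (\<lambda>u. S u \<omega> j) s - left_lim (\<lambda>u. S u \<omega> i) s) *
           (real (Np (i, j) s \<omega>) - left_lim (\<lambda>u. real (Np (i, j) u \<omega>)) s))"
      by (rule eqw)
  qed
  have step: "S (grid n k) \<omega> = Yd n k \<omega>" if "k \<le> n" for k
    using that
  proof (induction k)
    case 0 show ?case by (simp add: grid0)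
  next
    case (Suc k)
    have kn: "k < n" using Suc.prems by simp
    have IH: "S (grid n k) \<omega> = Yd n k \<omega>" using Suc.IH Suc.prems by simp
    have gk: "\<omega> \<in> good n k" using w kn by (simp add: G_def)
    have ab: "0 \<le> grid n k" "grid n k \<le> grid n (Suc k)" by (rule grid_nonneg, rule grid_mono)
    have le: "Np q (grid n k) \<omega> \<le> Np q (grid n (Suc k)) \<omega>" if "q \<in> off_diag" for q
      using Npmono[OF that w(1) ab] .
    show ?case
    proof (cases "\<omega> \<in> E0 n k")
      case True
      then have z: "inc n q k \<omega> = 0" if "q \<in> off_diag" for q
        using that by (simp add: E0_def cyl_iff)
      have e: "Np q (grid n (Suc k)) \<omega> = Np q (grid n k) \<omega>" if "q \<in> off_diag" for q
        using z[OF that] le[OF that] by (simp add: inc_def)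
      have "S (grid n (Suc k)) \<omega> = S (grid n k) \<omega>"
        using ps.step_zero[OF ab(1) ab(2) order_refl] e by blast
      moreover have "\<omega> \<notin> (\<Union>p\<in>off_diag. Ep n p k)"
        using True E0_Ep_disj[of _ n k] by blast
      ultimately show ?thesis using IH Yd_noEp by simp
    next
      case False
      then obtain p0 where p0: "p0 \<in> off_diag" "\<omega> \<in> Ep n p0 k" using gk by (auto simp: good_def)
      obtain i0 j0 where ij: "p0 = (i0, j0)" by (cases p0)
      have incs: "inc n q k \<omega> = (if q = p0 then 1 else 0)" if "q \<in> off_diag" for q
        using p0(2) that by (simp add: Ep_def cyl_iff)
      have e1: "Np (i0, j0) (grid n (Suc k)) \<omega> = Suc (Np (i0, j0) (grid n k) \<omega>)"
        using incs[OF p0(1)] le[OF p0(1)] ij by (simp add: inc_def)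
      have e: "Np q (grid n (Suc k)) \<omega> = Np q (grid n k) \<omega>" if "q \<in> off_diag" "q \<noteq> (i0, j0)" for q
        using incs[OF that(1)] le[OF that(1)] that(2) ij by (simp add: inc_def)
      have "S (grid n (Suc k)) \<omega> = (S (grid n k) \<omega>)(i0 := S (grid n k) \<omega> j0)"
        using ps.step_one[OF ab, of i0 j0] p0(1) ij e1 e by blast
      moreover have "Yd n (Suc k) \<omega> = (Yd n k \<omega>)(i0 := Yd n k \<omega> j0)"
        using Yd_Ep[of i0 j0 \<omega> n k] p0 ij by simp
      ultimately show ?thesis using IH by simp
    qed
  qed
  have "grid n n = t" using n by (simp add: grid_def)
  then show ?thesis using step[of n] by simp
qed

lemma sum_le1_iff:
  fixes d :: "'q \<Rightarrow> nat"
  assumes fin: "finite Qs"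
  shows "(\<Sum>q\<in>Qs. d q) \<le> 1 \<longleftrightarrow> (\<forall>q\<in>Qs. d q = 0) \<or> (\<exists>p\<in>Qs. \<forall>q\<in>Qs. d q = (if q = p then 1 else 0))"
proof
  assume s: "(\<Sum>q\<in>Qs. d q) \<le> 1"
  show "(\<forall>q\<in>Qs. d q = 0) \<or> (\<exists>p\<in>Qs. \<forall>q\<in>Qs. d q = (if q = p then 1 else 0))"
  proof (cases "\<forall>q\<in>Qs. d q = 0")
    case False
    then obtain p where p: "p \<in> Qs" "d p \<noteq> 0" by blast
    have dp: "d p \<le> 1" using member_le_sum[OF p(1), of d] fin s by simp
    have dq: "d q = 0" if "q \<in> Qs" "q \<noteq> p" for q
    proof -
      have "(\<Sum>r\<in>{p, q}. d r) \<le> (\<Sum>r\<in>Qs. d r)" using that p fin by (intro sum_mono2) auto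
      then show ?thesis using that p s by simp
    qed
    have "\<forall>q\<in>Qs. d q = (if q = p then 1 else 0)" using dp dq p by auto
    then show ?thesis using p by blast
  qed simp
next
  assume "(\<forall>q\<in>Qs. d q = 0) \<or> (\<exists>p\<in>Qs. \<forall>q\<in>Qs. d q = (if q = p then 1 else 0))"
  then show "(\<Sum>q\<in>Qs. d q) \<le> 1"
  proof
    assume "\<forall>q\<in>Qs. d q = 0" then show ?thesis by simp
  next
    assume "\<exists>p\<in>Qs. \<forall>q\<in>Qs. d q = (if q = p then 1 else 0)"
    then obtain p where p: "p \<in> Qs" "\<forall>q\<in>Qs. d q = (if q = p then 1 else 0)" by blast
    have "(\<Sum>q\<in>Qs. d q) = (\<Sum>q\<in>Qs. (if q = p then 1 else 0))" using p(2) by (intro sum.cong) auto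
    then show ?thesis using fin p(1) by simp
  qed
qed

lemma good_iff:
  assumes w: "\<omega> \<in> space M"
  shows "\<omega> \<in> good n k \<longleftrightarrow> (\<Sum>q\<in>off_diag. inc n q k \<omega>) \<le> 1"
proof -
  have "\<omega> \<in> good n k \<longleftrightarrow> (\<forall>q\<in>off_diag. inc n q k \<omega> = 0) \<or>
      (\<exists>p\<in>off_diag. \<forall>q\<in>off_diag. inc n q k \<omega> = (if q = p then 1 else 0))"
    using w by (auto simp: good_def E0_def Ep_def cyl_iff)
  then show ?thesis using sum_le1_iff[OF fin_off, of "\<lambda>q. inc n q k \<omega>"] by simp
qed

lemma G_mono:
  assumes n: "0 < n"
  shows "G n \<subseteq> G (2 * n)"
proof
  fix \<omega> assume w: "\<omega> \<in> G n"
  have ws: "\<omega> \<in> space M" using w by (simp add: G_def)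
  have "\<omega> \<in> good (2 * n) k'" if k': "k' < 2 * n" for k'
  proof -
    define k where "k = k' div 2"
    have kn: "k < n" using k' by (simp add: k_def)
    have gk: "(\<Sum>q\<in>off_diag. inc n q k \<omega>) \<le> 1" using w kn ws good_iff by (simp add: G_def)
    have g1: "grid n k \<le> grid (2 * n) k'"
    proof -
      have "real (2 * k) \<le> real k'" by (simp add: k_def)
      then have "real (2 * k) * t / real (2 * n) \<le> real k' * t / real (2 * n)"
        using tpos by (intro divide_right_mono mult_right_mono) auto
      then show ?thesis using n by (simp add: grid_def)
    qed
    have g2: "grid (2 * n) (Suc k') \<le> grid n (Suc k)"
    proof -
      have "real (Suc k') \<le> real (2 * Suc k)" by (simp add: k_def)
      then have "real (Suc k') * t / real (2 * n) \<le> real (2 * Suc k) * t / real (2 * n)"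
        using tpos by (intro divide_right_mono mult_right_mono) auto
      moreover have "real (2 * Suc k) * t / real (2 * n) = real (Suc k) * t / real n"
        using n by (simp add: field_simps)
      ultimately show ?thesis by (simp only: grid_def)
    qed
    have "inc (2 * n) q k' \<omega> \<le> inc n q k \<omega>" if q: "q \<in> off_diag" for q
    proof -
      have "Np q (grid n k) \<omega> \<le> Np q (grid (2 * n) k') \<omega>"
        using Npmono[OF q ws grid_nonneg g1] .
      moreover have "Np q (grid (2 * n) (Suc k')) \<omega> \<le> Np q (grid n (Suc k)) \<omega>"
        using Npmono[OF q ws grid_nonneg g2] .
      ultimately show ?thesis by (simp add: inc_def)
    qed
    then have "(\<Sum>q\<in>off_diag. inc (2 * n) q k' \<omega>) \<le> (\<Sum>q\<in>off_diag. inc n q k \<omega>)"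
      by (intro sum_mono)
    then show ?thesis using gk good_iff[OF ws] by simp
  qed
  then show "\<omega> \<in> G (2 * n)" using ws by (simp add: G_def)
qed

end

lemma Wf_meas:
  assumes [measurable]: "\<And>i. (\<lambda>\<omega>. g \<omega> i) \<in> borel_measurable N"
  shows "(\<lambda>\<omega>. Wf (g \<omega> :: 'n::finite \<Rightarrow> real)) \<in> borel_measurable N"
  unfolding Wf_def mean_state_def by measurable

lemma upd_meas:
  assumes [measurable]: "\<And>i. (\<lambda>\<omega>. g \<omega> i) \<in> borel_measurable N"
  shows "(\<lambda>\<omega>. ((g \<omega>)(i0 := g \<omega> j0)) i) \<in> borel_measurable N"
  by (cases "i = i0") simp_all

context cmodel begin

definition Fs :: "nat \<Rightarrow> (('n \<times> 'n) \<times> nat) option set \<Rightarrow> 'a measure" where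
  "Fs n K = sigma (space M) (\<Union>i\<in>K. Fam n i)"

lemma Fam_pow: "Fam n i \<subseteq> Pow (space M)"
  by (cases i) (auto simp: Fam_def)

lemma Fs_pow: "(\<Union>i\<in>K. Fam n i) \<subseteq> Pow (space M)"
  using Fam_pow by blast

lemma space_Fs[simp]: "space (Fs n K) = space M"
  unfolding Fs_def using Fs_pow by simp

lemma sets_Fs: "sets (Fs n K) = sigma_sets (space M) (\<Union>i\<in>K. Fam n i)"
  unfolding Fs_def using Fs_pow by simp

lemma inc_Fs: "Some (q, j) \<in> K \<Longrightarrow> inc n q j -` B \<inter> space M \<in> sets (Fs n K)"
  unfolding sets_Fs using inc_in_Fam[of n q j B] by (intro sigma_sets.Basic) blast

lemma cyl_Fs: "(\<And>q. q \<in> off_diag \<Longrightarrow> Some (q, j) \<in> K) \<Longrightarrow> cyl n j d \<in> sets (Fs n K)"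
  unfolding cyl_def using off_ne by (intro sets.finite_INT fin_off inc_Fs) auto

lemma Ep_Fs: "(\<And>q. q \<in> off_diag \<Longrightarrow> Some (q, j) \<in> K) \<Longrightarrow> Ep n p j \<in> sets (Fs n K)"
  unfolding Ep_def by (rule cyl_Fs)

lemma S0_Fs: "None \<in> K \<Longrightarrow> (\<lambda>\<omega>. S 0 \<omega> i) \<in> borel_measurable (Fs n K)"
proof -
  assume N: "None \<in> K"
  have "S 0 \<in> measurable (Fs n K) (Pi\<^sub>M (UNIV::'n set) (\<lambda>_. borel :: real measure))"
  proof (rule measurableI)
    fix x assume "x \<in> space (Fs n K)"
    show "S 0 x \<in> space (Pi\<^sub>M (UNIV::'n set) (\<lambda>_. borel :: real measure))" by (simp add: space_PiM)
  next
    fix A assume A: "A \<in> sets (Pi\<^sub>M (UNIV::'n set) (\<lambda>_. borel :: real measure))"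
    have "S 0 -` A \<inter> space M \<in> Fam n None" unfolding Fam_def using A by auto
    then show "S 0 -` A \<inter> space (Fs n K) \<in> sets (Fs n K)"
      unfolding sets_Fs using N by (auto intro!: sigma_sets.Basic)
  qed
  then show ?thesis by (rule measurable_compose[OF _ measurable_component_singleton]) simp
qed

definition K1 :: "nat \<Rightarrow> (('n \<times> 'n) \<times> nat) option set" where
  "K1 k = insert None (Some ` (off_diag \<times> {..<k}))"
definition K2 :: "nat \<Rightarrow> (('n \<times> 'n) \<times> nat) option set" where
  "K2 k = Some ` (off_diag \<times> {k})"

lemma Yd_Fs: "j \<le> k \<Longrightarrow> (\<lambda>\<omega>. Yd n j \<omega> i) \<in> borel_measurable (Fs n (K1 k))"
proof (induction j arbitrary: i)
  case 0
  then show ?case by (simp add: S0_Fs K1_def)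
next
  case (Suc j)
  have Ep: "Ep n p j \<in> sets (Fs n (K1 k))" for p
    using Suc.prems by (intro Ep_Fs) (auto simp: K1_def)
  have IH: "\<And>i. (\<lambda>\<omega>. Yd n j \<omega> i) \<in> borel_measurable (Fs n (K1 k))" using Suc by simp
  show ?case
    by (simp only: Yd.simps) (intro borel_measurable_add borel_measurable_sum borel_measurable_times
        borel_measurable_diff borel_measurable_indicator IH Ep)
qed

lemma Fs_sub: "K \<subseteq> insert None (Some ` (off_diag \<times> {..<Kb})) \<Longrightarrow> sets (Fs n K) \<subseteq> events"
  unfolding sets_Fs by (rule sets.sigma_sets_subset) (use Fam_events in blast)

lemma meas_Fs_M: "K \<subseteq> insert None (Some ` (off_diag \<times> {..<Kb})) \<Longrightarrow> f \<in> borel_measurable (Fs n K) \<Longrightarrow> f \<in> borel_measurable M"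
  using measurable_mono[of borel borel "Fs n K" M] Fs_sub[of K Kb n] by auto

lemma off_sum:
  fixes g :: "'n \<times> 'n \<Rightarrow> real"
  shows "(\<Sum>p\<in>off_diag. g p) = (\<Sum>i\<in>UNIV. \<Sum>j\<in>UNIV. if i = j then 0 else g (i, j))"
proof -
  have "(\<Sum>i\<in>UNIV. \<Sum>j\<in>UNIV. if i = j then 0 else g (i, j)) = (\<Sum>(i, j)\<in>UNIV \<times> UNIV. if i = j then 0 else g (i, j))"
    by (rule sum.cartesian_product)
  also have "\<dots> = (\<Sum>p\<in>UNIV. if p \<in> off_diag then g p else 0)"
    by (intro sum.cong) (auto simp: off_diag_def)
  also have "\<dots> = (\<Sum>p\<in>off_diag. g p)"
    by (simp add: sum.If_cases)
  finally show ?thesis by simp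
qed

definition Jp :: "'n \<times> 'n \<Rightarrow> ('n \<Rightarrow> real) \<Rightarrow> 'n \<Rightarrow> real" where
  "Jp p y = (case p of (i, j) \<Rightarrow> y(i := y j))"

lemma real_step:
  fixes y :: "'n \<Rightarrow> real"
  assumes mu: "\<forall>y. 2 * \<mu> * Wf y \<le> Qf a y"
  shows "Wf y * (1 - (\<Sum>p\<in>off_diag. ar p * x * e)) + (\<Sum>p\<in>off_diag. Wf (Jp p y) * (ar p * x * e))
     = Wf y - x * e * Qf a y / real CARD('n)"
proof -
  have sym: "\<And>i j. aa a i j = aa a j i" using symm by (simp add: aa_def)
  have "Wf y * (1 - (\<Sum>p\<in>off_diag. ar p * x * e)) + (\<Sum>p\<in>off_diag. Wf (Jp p y) * (ar p * x * e))
      = Wf y + x * e * (\<Sum>p\<in>off_diag. ar p * (Wf (Jp p y) - Wf y))"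
    by (simp add: algebra_simps sum_distrib_left sum_distrib_right sum_subtractf)
  also have "(\<Sum>p\<in>off_diag. ar p * (Wf (Jp p y) - Wf y))
      = (\<Sum>i\<in>UNIV. \<Sum>j\<in>UNIV. aa a i j * (Wf (y(i := y j)) - Wf y))"
    unfolding off_sum by (intro sum.cong refl) (simp add: aa_def ar_def Jp_def)
  also have "\<dots> = - Qf a y / real CARD('n)" by (rule W_jump_sum[OF sym])
  finally show ?thesis by simp
qed


lemma Wf_nonneg: "0 \<le> Wf y" unfolding Wf_def by (intro sum_nonneg) simp

lemma exp_step:
  assumes n: "0 < n" and mu: "\<forall>y. 2 * \<mu> * Wf y \<le> Qf a y"
    and c: "0 \<le> 1 - (t / n) * exp (- (Atot * (t / n))) * 2 * \<mu> / real CARD('n)"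
  shows "(\<integral>\<^sup>+\<omega>. ennreal (Wf (Yd n (Suc k) \<omega>)) \<partial>M)
     \<le> ennreal (1 - (t / n) * exp (- (Atot * (t / n))) * 2 * \<mu> / real CARD('n)) * (\<integral>\<^sup>+\<omega>. ennreal (Wf (Yd n k \<omega>)) \<partial>M)"
proof -
  define x where "x = t / real n"
  define e where "e = exp (- (Atot * x))"
  define qq where "qq p = ar p * x * e" for p
  define c0 where "c0 = 1 - (\<Sum>p\<in>off_diag. qq p)"
  define Cc where "Cc = space M - (\<Union>p\<in>off_diag. Ep n p k)"
  define Y where "Y = Yd n k"
  define r where "r = 1 - x * e * 2 * \<mu> / real CARD('n)"
  have r: "0 \<le> r" using c by (simp add: r_def x_def e_def)
  have Ymeas: "\<And>i. (\<lambda>\<omega>. Y \<omega> i) \<in> borel_measurable (Fs n (K1 k))" using Yd_Fs[of k k n] by (simp add: Y_def)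
  have WY: "(\<lambda>\<omega>. Wf (Y \<omega>)) \<in> borel_measurable (Fs n (K1 k))" by (rule Wf_meas[OF Ymeas])
  have WJ: "(\<lambda>\<omega>. Wf (Jp p (Y \<omega>))) \<in> borel_measurable (Fs n (K1 k))" for p
    by (cases p) (auto simp: Jp_def intro!: Wf_meas upd_meas Ymeas)
  have K1sub: "K1 k \<subseteq> insert None (Some ` (off_diag \<times> {..<k}))" by (simp add: K1_def)
  have WYM[measurable]: "(\<lambda>\<omega>. Wf (Y \<omega>)) \<in> borel_measurable M" by (rule meas_Fs_M[OF K1sub WY])
  have WJM[measurable]: "(\<lambda>\<omega>. Wf (Jp p (Y \<omega>))) \<in> borel_measurable M" for p by (rule meas_Fs_M[OF K1sub WJ])
  have EpK2: "Ep n p k \<in> sets (Fs n (K2 k))" for p by (rule Ep_Fs) (auto simp: K2_def)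
  have spK2: "space M \<in> sets (Fs n (K2 k))" using sets.top[of "Fs n (K2 k)"] by simp
  have CcK2: "Cc \<in> sets (Fs n (K2 k))" unfolding Cc_def using fin_off EpK2 spK2
    by (intro sets.Diff sets.finite_UN) auto
  have EpM[measurable]: "Ep n p k \<in> events" for p by (rule Ep_event)
  have CcM[measurable]: "Cc \<in> events" unfolding Cc_def using fin_off
    by (intro sets.Diff sets.top sets.finite_UN Ep_event) auto
  have indK: "indep_sets (Fam n) (K1 k \<union> K2 k)"
  proof -
    have "K1 k \<union> K2 k = insert None (Some ` (off_diag \<times> {..<Suc k}))"
      by (auto simp: K1_def K2_def lessThan_Suc)
    then show ?thesis using indepF by simp
  qed
  have disjK: "K1 k \<inter> K2 k = {}" by (auto simp: K1_def K2_def)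
  have stab: "\<And>i. i \<in> K1 k \<union> K2 k \<Longrightarrow> Int_stable (Fam n i)" using Fam_stable by blast
  have fac: "(\<integral>\<^sup>+\<omega>. ennreal (f \<omega>) * indicator B \<omega> \<partial>M) = (\<integral>\<^sup>+\<omega>. ennreal (f \<omega>) \<partial>M) * emeasure M B"
    if f: "f \<in> borel_measurable (Fs n (K1 k))" and fnn: "\<And>\<omega>. 0 \<le> f \<omega>" and B: "B \<in> sets (Fs n (K2 k))" for f B
  proof (rule indep_factor[OF indK disjK stab])
    show "f \<in> borel_measurable (sigma (space M) (\<Union>i\<in>K1 k. Fam n i))" using f by (simp add: Fs_def)
    show "B \<in> sigma_sets (space M) (\<Union>i\<in>K2 k. Fam n i)" using B by (simp add: sets_Fs)
  qed (use fnn in auto)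
  have pw: "ennreal (Wf (Yd n (Suc k) \<omega>)) = ennreal (Wf (Y \<omega>)) * indicator Cc \<omega>
      + (\<Sum>p\<in>off_diag. ennreal (Wf (Jp p (Y \<omega>))) * indicator (Ep n p k) \<omega>)" if w: "\<omega> \<in> space M" for \<omega>
  proof (cases "\<omega> \<in> (\<Union>p\<in>off_diag. Ep n p k)")
    case True
    then obtain p0 where p0: "p0 \<in> off_diag" "\<omega> \<in> Ep n p0 k" by blast
    obtain i0 j0 where ij: "p0 = (i0, j0)" by (cases p0)
    have ind: "indicator (Ep n p k) \<omega> = (if p = p0 then 1 else (0::ennreal))" if "p \<in> off_diag" for p
    proof (cases "p = p0")
      case False
      then have "\<omega> \<notin> Ep n p k" using Ep_disj[OF p0(1) that, of n k] p0(2) by blast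
      then show ?thesis using False by simp
    qed (use p0 in simp)
    have "(\<Sum>p\<in>off_diag. ennreal (Wf (Jp p (Y \<omega>))) * indicator (Ep n p k) \<omega>)
        = (\<Sum>p\<in>off_diag. (if p = p0 then ennreal (Wf (Jp p0 (Y \<omega>))) else 0))"
      by (intro sum.cong refl) (simp add: ind)
    also have "\<dots> = ennreal (Wf (Jp p0 (Y \<omega>)))" using p0(1) fin_off by (simp add: sum.delta')
    finally have s: "(\<Sum>p\<in>off_diag. ennreal (Wf (Jp p (Y \<omega>))) * indicator (Ep n p k) \<omega>) = ennreal (Wf (Jp p0 (Y \<omega>)))" .
    have "\<omega> \<notin> Cc" using True by (simp add: Cc_def)
    moreover have "Yd n (Suc k) \<omega> = Jp p0 (Y \<omega>)"
      using Yd_Ep[of i0 j0 \<omega> n k] p0 ij by (simp add: Y_def Jp_def)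
    ultimately show ?thesis using s by simp
  next
    case False
    then have "\<omega> \<in> Cc" using w by (simp add: Cc_def)
    moreover have "indicator (Ep n p k) \<omega> = (0::ennreal)" if "p \<in> off_diag" for p
      using False that by auto
    moreover have "Yd n (Suc k) \<omega> = Y \<omega>" using Yd_noEp[OF False] by (simp add: Y_def)
    ultimately show ?thesis by simp
  qed
  have probEp: "emeasure M (Ep n p k) = ennreal (qq p)" if "p \<in> off_diag" for p
    using prob_Ep[OF n that, of k] by (simp add: emeasure_eq_measure qq_def x_def e_def)
  have probCc: "prob Cc = c0"
  proof -
    have "prob (\<Union>p\<in>off_diag. Ep n p k) = (\<Sum>p\<in>off_diag. prob (Ep n p k))"
      using fin_off Ep_disj
      by (intro finite_measure_finite_Union) (auto simp: disjoint_family_on_def Ep_event)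
    also have "\<dots> = (\<Sum>p\<in>off_diag. qq p)"
      using prob_Ep[OF n] by (simp add: qq_def x_def e_def)
    finally have "prob (\<Union>p\<in>off_diag. Ep n p k) = (\<Sum>p\<in>off_diag. qq p)" .
    moreover have "prob Cc = 1 - prob (\<Union>p\<in>off_diag. Ep n p k)"
      unfolding Cc_def using fin_off by (intro prob_compl sets.finite_UN Ep_event) auto
    ultimately show ?thesis by (simp add: c0_def)
  qed
  have c0: "0 \<le> c0" using probCc by (metis measure_nonneg)
  have qq: "0 \<le> qq p" if "p \<in> off_diag" for p
    using ar_nonneg[OF that] tpos by (simp add: qq_def x_def e_def)
  have "(\<integral>\<^sup>+\<omega>. ennreal (Wf (Yd n (Suc k) \<omega>)) \<partial>M)
      = (\<integral>\<^sup>+\<omega>. ennreal (Wf (Y \<omega>)) * indicator Cc \<omega>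
           + (\<Sum>p\<in>off_diag. ennreal (Wf (Jp p (Y \<omega>))) * indicator (Ep n p k) \<omega>) \<partial>M)"
    by (intro nn_integral_cong pw)
  also have "\<dots> = (\<integral>\<^sup>+\<omega>. ennreal (Wf (Y \<omega>)) * indicator Cc \<omega> \<partial>M)
      + (\<Sum>p\<in>off_diag. \<integral>\<^sup>+\<omega>. ennreal (Wf (Jp p (Y \<omega>))) * indicator (Ep n p k) \<omega> \<partial>M)"
  proof -
    have m1: "(\<lambda>\<omega>. ennreal (Wf (Y \<omega>)) * indicator Cc \<omega>) \<in> borel_measurable M" by measurable
    have m2: "(\<lambda>\<omega>. \<Sum>p\<in>off_diag. ennreal (Wf (Jp p (Y \<omega>))) * indicator (Ep n p k) \<omega>) \<in> borel_measurable M"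
      by measurable
    have m3: "(\<lambda>\<omega>. ennreal (Wf (Jp p (Y \<omega>))) * indicator (Ep n p k) \<omega>) \<in> borel_measurable M" for p
      by measurable
    show ?thesis by (simp only: nn_integral_add[OF m1 m2] nn_integral_sum[OF m3])
  qed
  also have "\<dots> = (\<integral>\<^sup>+\<omega>. ennreal (Wf (Y \<omega>)) \<partial>M) * ennreal c0
      + (\<Sum>p\<in>off_diag. (\<integral>\<^sup>+\<omega>. ennreal (Wf (Jp p (Y \<omega>))) \<partial>M) * ennreal (qq p))"
    using fac[OF WY Wf_nonneg CcK2] fac[OF WJ Wf_nonneg EpK2] probEp probCc
    by (simp add: emeasure_eq_measure)
  also have "\<dots> = (\<integral>\<^sup>+\<omega>. ennreal (Wf (Y \<omega>)) * ennreal c0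
      + (\<Sum>p\<in>off_diag. ennreal (Wf (Jp p (Y \<omega>))) * ennreal (qq p)) \<partial>M)"
  proof -
    have m1: "(\<lambda>\<omega>. ennreal (Wf (Y \<omega>)) * ennreal c0) \<in> borel_measurable M" by measurable
    have m2: "(\<lambda>\<omega>. \<Sum>p\<in>off_diag. ennreal (Wf (Jp p (Y \<omega>))) * ennreal (qq p)) \<in> borel_measurable M"
      by measurable
    have m3: "(\<lambda>\<omega>. ennreal (Wf (Jp p (Y \<omega>))) * ennreal (qq p)) \<in> borel_measurable M" for p
      by measurable
    have m4: "(\<lambda>\<omega>. ennreal (Wf (Jp p (Y \<omega>)))) \<in> borel_measurable M" for p by measurable
    have m5: "(\<lambda>\<omega>. ennreal (Wf (Y \<omega>))) \<in> borel_measurable M" by measurable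
    show ?thesis by (simp only: nn_integral_add[OF m1 m2] nn_integral_sum[OF m3] nn_integral_multc[OF m4] nn_integral_multc[OF m5])
  qed
  also have "\<dots> \<le> (\<integral>\<^sup>+\<omega>. ennreal r * ennreal (Wf (Y \<omega>)) \<partial>M)"
  proof (rule nn_integral_mono)
    fix \<omega>
    have "ennreal (Wf (Y \<omega>)) * ennreal c0 + (\<Sum>p\<in>off_diag. ennreal (Wf (Jp p (Y \<omega>))) * ennreal (qq p))
        = ennreal (Wf (Y \<omega>) * c0 + (\<Sum>p\<in>off_diag. Wf (Jp p (Y \<omega>)) * qq p))"
    proof -
      have s1: "(\<Sum>p\<in>off_diag. ennreal (Wf (Jp p (Y \<omega>))) * ennreal (qq p))
          = (\<Sum>p\<in>off_diag. ennreal (Wf (Jp p (Y \<omega>)) * qq p))"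
        by (intro sum.cong refl) (rule ennreal_mult[OF Wf_nonneg qq, symmetric])
      also have "\<dots> = ennreal (\<Sum>p\<in>off_diag. Wf (Jp p (Y \<omega>)) * qq p)"
        by (rule sum_ennreal) (simp add: Wf_nonneg qq)
      finally have s1': "(\<Sum>p\<in>off_diag. ennreal (Wf (Jp p (Y \<omega>))) * ennreal (qq p))
          = ennreal (\<Sum>p\<in>off_diag. Wf (Jp p (Y \<omega>)) * qq p)" .
      have s2: "ennreal (Wf (Y \<omega>)) * ennreal c0 = ennreal (Wf (Y \<omega>) * c0)"
        by (rule ennreal_mult[OF Wf_nonneg c0, symmetric])
      have nn: "0 \<le> (\<Sum>p\<in>off_diag. Wf (Jp p (Y \<omega>)) * qq p)"
        by (intro sum_nonneg mult_nonneg_nonneg Wf_nonneg qq)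
      have nn2: "0 \<le> Wf (Y \<omega>) * c0" by (intro mult_nonneg_nonneg Wf_nonneg c0)
      show ?thesis unfolding s1' s2 using nn nn2 by (simp add: ennreal_plus[symmetric] del: ennreal_plus)
    qed
    also have "\<dots> \<le> ennreal (r * Wf (Y \<omega>))"
    proof (rule ennreal_leI)
      have "Wf (Y \<omega>) * c0 + (\<Sum>p\<in>off_diag. Wf (Jp p (Y \<omega>)) * qq p) = Wf (Y \<omega>) - x * e * Qf a (Y \<omega>) / real CARD('n)"
        using real_step[OF mu, of "Y \<omega>" x e] by (simp add: c0_def qq_def)
      also have "\<dots> \<le> Wf (Y \<omega>) - x * e * (2 * \<mu> * Wf (Y \<omega>)) / real CARD('n)"
        using mu tpos by (intro diff_left_mono divide_right_mono mult_left_mono) (auto simp: x_def e_def)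
      also have "\<dots> = r * Wf (Y \<omega>)" by (simp add: r_def algebra_simps)
      finally show "Wf (Y \<omega>) * c0 + (\<Sum>p\<in>off_diag. Wf (Jp p (Y \<omega>)) * qq p) \<le> r * Wf (Y \<omega>)" .
    qed
    also have "\<dots> = ennreal r * ennreal (Wf (Y \<omega>))" using r by (simp add: ennreal_mult')
    finally show "ennreal (Wf (Y \<omega>)) * ennreal c0 + (\<Sum>p\<in>off_diag. ennreal (Wf (Jp p (Y \<omega>))) * ennreal (qq p))
        \<le> ennreal r * ennreal (Wf (Y \<omega>))" .
  qed
  also have "\<dots> = ennreal r * (\<integral>\<^sup>+\<omega>. ennreal (Wf (Y \<omega>)) \<partial>M)"
    by (simp add: nn_integral_cmult)
  finally show ?thesis by (simp add: r_def x_def e_def Y_def)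
qed

end

context cmodel begin

lemma St_meas: "0 \<le> u \<Longrightarrow> (\<lambda>\<omega>. S u \<omega> i) \<in> borel_measurable M"
proof -
  assume u: "0 \<le> u"
  have "S u \<in> measurable M (Pi\<^sub>M (UNIV::'n set) (\<lambda>_. borel :: real measure))"
    using sol u unfolding consensus_solution_def by blast
  then show ?thesis by (rule measurable_compose[OF _ measurable_component_singleton]) simp
qed

lemma WSt_meas: "0 \<le> u \<Longrightarrow> (\<lambda>\<omega>. Wf (S u \<omega>)) \<in> borel_measurable M"
  by (intro Wf_meas St_meas)

lemma iterate:
  assumes n: "0 < n" and mu: "\<forall>y. 2 * \<mu> * Wf y \<le> Qf a y"
    and c: "0 \<le> 1 - (t / n) * exp (- (Atot * (t / n))) * 2 * \<mu> / real CARD('n)"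
  shows "(\<integral>\<^sup>+\<omega>. ennreal (Wf (Yd n k \<omega>)) \<partial>M)
     \<le> ennreal ((1 - (t / n) * exp (- (Atot * (t / n))) * 2 * \<mu> / real CARD('n)) ^ k) * (\<integral>\<^sup>+\<omega>. ennreal (Wf (S 0 \<omega>)) \<partial>M)"
proof (induction k)
  case 0 then show ?case by simp
next
  case (Suc k)
  define r where "r = 1 - (t / n) * exp (- (Atot * (t / n))) * 2 * \<mu> / real CARD('n)"
  have r: "0 \<le> r" using c by (simp add: r_def)
  have "(\<integral>\<^sup>+\<omega>. ennreal (Wf (Yd n (Suc k) \<omega>)) \<partial>M) \<le> ennreal r * (\<integral>\<^sup>+\<omega>. ennreal (Wf (Yd n k \<omega>)) \<partial>M)"
    using exp_step[OF n mu c] by (simp add: r_def)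
  also have "\<dots> \<le> ennreal r * (ennreal (r ^ k) * (\<integral>\<^sup>+\<omega>. ennreal (Wf (S 0 \<omega>)) \<partial>M))"
    using Suc.IH by (intro mult_left_mono) (simp_all add: r_def)
  also have "\<dots> = ennreal (r ^ Suc k) * (\<integral>\<^sup>+\<omega>. ennreal (Wf (S 0 \<omega>)) \<partial>M)"
    using r by (simp add: ennreal_mult mult.assoc)
  finally show ?case by (simp add: r_def)
qed

lemma factor_bound:
  assumes mu: "0 < \<mu>" and n1: "2 * Atot * t \<le> real n" and n2: "2 * \<mu> * t / real CARD('n) \<le> real n"
    and n: "0 < n"
  shows "0 \<le> 1 - (t / n) * exp (- (Atot * (t / n))) * 2 * \<mu> / real CARD('n)"
    and "(1 - (t / n) * exp (- (Atot * (t / n))) * 2 * \<mu> / real CARD('n)) ^ n \<le> exp (- \<mu> * t / real CARD('n))"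
proof -
  define N where "N = real CARD('n)"
  have N: "0 < N" by (simp add: N_def)
  define e where "e = exp (- (Atot * (t / n)))"
  define c where "c = (t / n) * e * 2 * \<mu> / N"
  have e1: "e \<le> 1" using Atot_nonneg tpos n by (simp add: e_def)
  have e2: "1/2 \<le> e"
  proof -
    have "Atot * (t / n) \<le> 1/2" using n1 n tpos by (simp add: field_simps)
    moreover have "1 - Atot * (t / n) \<le> e" using exp_ge_add_one_self[of "- (Atot * (t / n))"] by (simp add: e_def)
    ultimately show ?thesis by simp
  qed
  have c0: "0 \<le> c" using tpos mu N e2 by (simp add: c_def)
  have "c \<le> (t / n) * 2 * \<mu> / N"
    using e1 tpos mu N n c0 by (simp add: c_def divide_right_mono mult_left_le)
  also have "\<dots> \<le> 1" using n2 n N by (simp add: N_def field_simps)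
  finally have c1: "c \<le> 1" .
  show "0 \<le> 1 - (t / n) * exp (- (Atot * (t / n))) * 2 * \<mu> / real CARD('n)"
    using c1 by (simp add: c_def e_def N_def)
  have "(1 - c) ^ n \<le> exp (- c) ^ n"
    using c1 exp_ge_add_one_self[of "- c"] by (intro power_mono) auto
  also have "\<dots> = exp (- (c * n))" by (simp add: exp_of_nat_mult[symmetric] mult.commute)
  also have "\<dots> \<le> exp (- \<mu> * t / N)"
  proof -
    have "c * n = t * e * 2 * \<mu> / N" using n by (simp add: c_def field_simps)
    moreover have "\<mu> * t / N \<le> t * e * 2 * \<mu> / N"
      using e2 tpos mu N by (simp add: field_simps mult_left_mono)
    ultimately show ?thesis by simp
  qed
  finally show "(1 - (t / n) * exp (- (Atot * (t / n))) * 2 * \<mu> / real CARD('n)) ^ n \<le> exp (- \<mu> * t / real CARD('n))"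
    by (simp add: c_def e_def N_def)
qed


lemma small_zero:
  fixes x C :: real
  assumes "\<And>m::nat. x \<le> C / 2 ^ m" "0 \<le> x"
  shows "x = 0"
proof (rule ccontr)
  assume "x \<noteq> 0"
  then have x: "0 < x" using assms(2) by simp
  obtain m :: nat where m: "C / x < 2 ^ m" using real_arch_pow[of 2 "C / x"] by auto
  then have "C < x * 2 ^ m" using x by (simp add: field_simps)
  then have "C / 2 ^ m < x" by (simp add: field_simps)
  then show False using assms(1)[of m] by simp
qed

lemma main_bound:
  assumes mu: "0 < \<mu>" "\<forall>y. 2 * \<mu> * Wf y \<le> Qf a y"
  shows "(\<integral>\<^sup>+\<omega>. ennreal (Wf (S t \<omega>)) \<partial>M)
     \<le> ennreal (exp (- \<mu> * t / real CARD('n))) * (\<integral>\<^sup>+\<omega>. ennreal (Wf (S 0 \<omega>)) \<partial>M)"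
proof -
  define B where "B = ennreal (exp (- \<mu> * t / real CARD('n))) * (\<integral>\<^sup>+\<omega>. ennreal (Wf (S 0 \<omega>)) \<partial>M)"
  define Gm where "Gm m = G (2 ^ m)" for m
  define f where "f m \<omega> = ennreal (Wf (S t \<omega>)) * indicator (Gm m) \<omega>" for m \<omega>
  have Gm_inc: "Gm m \<subseteq> Gm (Suc m)" for m using G_mono[of "2 ^ m"] by (simp add: Gm_def)
  have Gm_mono: "Gm m \<subseteq> Gm m'" if "m \<le> m'" for m m'
    using that by (induction rule: dec_induct) (use Gm_inc in blast)+
  have fmono: "f m \<omega> \<le> f m' \<omega>" if "m \<le> m'" for m m' \<omega>
    using Gm_mono[OF that] by (auto simp: f_def indicator_def)
  have inc: "incseq f" unfolding incseq_def le_fun_def using fmono by blast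
  have WS[measurable]: "(\<lambda>\<omega>. Wf (S t \<omega>)) \<in> borel_measurable M" using WSt_meas tpos by simp
  have Gm_ev[measurable]: "Gm m \<in> events" for m by (simp add: Gm_def G_event)
  have fmeas: "f m \<in> borel_measurable M" for m unfolding f_def by measurable
  obtain m0 :: nat where m0: "max (2 * Atot * t) (2 * \<mu> * t / real CARD('n)) < 2 ^ m0"
    using real_arch_pow[of 2 "max (2 * Atot * t) (2 * \<mu> * t / real CARD('n))"] by (auto simp del: max_less_iff_conj)
  have AEsol: "AE \<omega> in M. \<forall>u\<ge>0. \<forall>i. S u \<omega> i = S 0 \<omega> i + (\<Sum>j\<in>UNIV - {i}. \<Sum>s\<in>jump_times (\<lambda>u. Np (i, j) u \<omega>) u.
           (left_lim (\<lambda>u. S u \<omega> j) s - left_lim (\<lambda>u. S u \<omega> i) s) *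
           (real (Np (i, j) s \<omega>) - left_lim (\<lambda>u. real (Np (i, j) u \<omega>)) s))"
    using sol unfolding consensus_solution_def by blast
  have term_bound: "integral\<^sup>N M (f m) \<le> B" if mm: "m0 \<le> m" for m
  proof -
    define n where "n = (2::nat) ^ m"
    have n: "0 < n" by (simp add: n_def)
    have p: "(2::real) ^ m0 \<le> 2 ^ m" by (rule power_increasing[OF mm]) simp
    have rn: "real n = 2 ^ m" by (simp add: n_def)
    have big: "max (2 * Atot * t) (2 * \<mu> * t / real CARD('n)) < real n"
      unfolding rn by (rule less_le_trans[OF m0 p])
    have n1: "2 * Atot * t \<le> real n" and n2: "2 * \<mu> * t / real CARD('n) \<le> real n" using big by auto
    note fb = factor_bound[OF mu(1) n1 n2 n]
    have AEeq: "AE \<omega> in M. f m \<omega> = ennreal (Wf (Yd n n \<omega>)) * indicator (G n) \<omega>"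
      using AEsol
    proof (rule AE_mp[OF _ AE_I2])
      fix \<omega> assume w: "\<omega> \<in> space M"
      show "(\<forall>u\<ge>0. \<forall>i. S u \<omega> i = S 0 \<omega> i + (\<Sum>j\<in>UNIV - {i}. \<Sum>s\<in>jump_times (\<lambda>u. Np (i, j) u \<omega>) u.
           (left_lim (\<lambda>u. S u \<omega> j) s - left_lim (\<lambda>u. S u \<omega> i) s) *
           (real (Np (i, j) s \<omega>) - left_lim (\<lambda>u. real (Np (i, j) u \<omega>)) s)))
          \<longrightarrow> f m \<omega> = ennreal (Wf (Yd n n \<omega>)) * indicator (G n) \<omega>"
      proof
        assume eqw: "\<forall>u\<ge>0. \<forall>i. S u \<omega> i = S 0 \<omega> i + (\<Sum>j\<in>UNIV - {i}. \<Sum>s\<in>jump_times (\<lambda>u. Np (i, j) u \<omega>) u.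
           (left_lim (\<lambda>u. S u \<omega> j) s - left_lim (\<lambda>u. S u \<omega> i) s) *
           (real (Np (i, j) s \<omega>) - left_lim (\<lambda>u. real (Np (i, j) u \<omega>)) s))"
        show "f m \<omega> = ennreal (Wf (Yd n n \<omega>)) * indicator (G n) \<omega>"
        proof (cases "\<omega> \<in> G n")
          case True
          have "S t \<omega> = Yd n n \<omega>" by (rule coupling[OF n w True eqw])
          then show ?thesis using True by (simp add: f_def Gm_def n_def)
        next
          case False
          then show ?thesis by (simp add: f_def Gm_def n_def)
        qed
      qed
    qed
    have "integral\<^sup>N M (f m) = (\<integral>\<^sup>+\<omega>. ennreal (Wf (Yd n n \<omega>)) * indicator (G n) \<omega> \<partial>M)"
      by (rule nn_integral_cong_AE[OF AEeq])
    also have "\<dots> \<le> (\<integral>\<^sup>+\<omega>. ennreal (Wf (Yd n n \<omega>)) \<partial>M)"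
      by (intro nn_integral_mono) (simp add: indicator_def)
    also have "\<dots> \<le> ennreal ((1 - (t / n) * exp (- (Atot * (t / n))) * 2 * \<mu> / real CARD('n)) ^ n)
        * (\<integral>\<^sup>+\<omega>. ennreal (Wf (S 0 \<omega>)) \<partial>M)"
      by (rule iterate[OF n mu(2) fb(1)])
    also have "\<dots> \<le> B" unfolding B_def
      by (intro mult_right_mono ennreal_leI fb(2)) simp
    finally show ?thesis .
  qed
  have null: "space M - (\<Union>m. Gm m) \<in> null_sets M"
  proof -
    have ev: "space M - (\<Union>m. Gm m) \<in> events" by measurable
    have "prob (space M - (\<Union>m. Gm m)) \<le> (Atot * t)^2 / 2 ^ m" for m
    proof -
      have "prob (space M - (\<Union>m. Gm m)) \<le> prob (space M - Gm m)"
        by (intro finite_measure_mono) auto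
      also have "\<dots> \<le> real (2 ^ m) * (Atot * (t / real (2 ^ m)))^2"
        unfolding Gm_def by (rule prob_notG) simp
      also have "\<dots> = (Atot * t)^2 / 2 ^ m" by (simp add: power2_eq_square field_simps)
      finally show ?thesis .
    qed
    then have "prob (space M - (\<Union>m. Gm m)) = 0" by (intro small_zero) auto
    then show ?thesis using ev by (simp add: emeasure_eq_measure null_sets_def)
  qed
  have AEU: "AE \<omega> in M. \<omega> \<in> (\<Union>m. Gm m)" by (rule AE_I'[OF null]) auto
  have "(\<integral>\<^sup>+\<omega>. ennreal (Wf (S t \<omega>)) \<partial>M) = (\<integral>\<^sup>+\<omega>. (SUP m. f m \<omega>) \<partial>M)"
  proof (rule nn_integral_cong_AE)
    show "AE \<omega> in M. ennreal (Wf (S t \<omega>)) = (SUP m. f m \<omega>)"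
      using AEU
    proof (rule AE_mp[OF _ AE_I2], intro impI)
      fix \<omega> assume "\<omega> \<in> (\<Union>m. Gm m)"
      then obtain m1 where m1: "\<omega> \<in> Gm m1" by blast
      have "f m1 \<omega> = ennreal (Wf (S t \<omega>))" using m1 by (simp add: f_def)
      then have "ennreal (Wf (S t \<omega>)) \<le> (SUP m. f m \<omega>)" by (metis SUP_upper UNIV_I)
      moreover have "(SUP m. f m \<omega>) \<le> ennreal (Wf (S t \<omega>))"
        by (rule SUP_least) (simp add: f_def indicator_def)
      ultimately show "ennreal (Wf (S t \<omega>)) = (SUP m. f m \<omega>)" by (rule antisym)
    qed
  qed
  also have "\<dots> = (SUP m. integral\<^sup>N M (f m))"
    by (rule nn_integral_monotone_convergence_SUP[OF inc fmeas])
  also have "\<dots> \<le> B"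
  proof (rule SUP_least)
    fix m
    have "integral\<^sup>N M (f m) \<le> integral\<^sup>N M (f (max m m0))"
      by (intro nn_integral_mono fmono) simp
    also have "\<dots> \<le> B" by (rule term_bound) simp
    finally show "integral\<^sup>N M (f m) \<le> B" .
  qed
  finally show ?thesis by (simp add: B_def)
qed

end

lemma V_Wf: "V x = Wf x / real CARD('n)" for x :: "'n::finite \<Rightarrow> real"
  by (simp add: V_def Wf_def)

lemma V_zero_card1:
  assumes "\<not> 2 \<le> CARD('n::finite)"
  shows "V (x :: 'n \<Rightarrow> real) = 0"
proof -
  have "CARD('n) \<noteq> 0" by simp
  then have c1: "CARD('n) = 1" using assms by linarith
  then obtain i0 :: 'n where U: "UNIV = {i0}" using card_1_singletonE by blast
  show ?thesis unfolding V_def mean_state_def U by simp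
qed

theorem mainTheorem13:
  fixes a :: "'n::finite \<Rightarrow> 'n \<Rightarrow> real"
    and M :: "'a measure"
    and Np :: "'n \<times> 'n \<Rightarrow> real \<Rightarrow> 'a \<Rightarrow> nat"
    and S :: "real \<Rightarrow> 'a \<Rightarrow> 'n \<Rightarrow> real"
    and t :: real
  assumes "prob_space M"
    and "\<And>i j. i \<noteq> j \<Longrightarrow> 0 \<le> a i j"
    and "\<And>i j. i \<noteq> j \<Longrightarrow> a i j = a j i"
    and "transpose (laplacian a) = laplacian a"
    and "weights_connected a"
    and "poisson_clocks M a Np S"
    and "consensus_solution M Np S"
    and "0 \<le> t"
  shows "(\<integral>\<^sup>+ \<omega>. ennreal (V (S t \<omega>)) \<partial>M)
           \<le> ennreal (exp (- kth_eigenvalue (laplacian a) 2 * t / real CARD('n)))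
               * (\<integral>\<^sup>+ \<omega>. ennreal (V (S 0 \<omega>)) \<partial>M)"
proof (cases "2 \<le> CARD('n)")
  case False
  then show ?thesis using V_zero_card1[OF False] by simp
next
  case card: True
  show ?thesis
  proof (cases "t = 0")
    case True
    then show ?thesis by simp
  next
    case False
    then have tpos: "0 < t" using assms(8) by simp
    have cm: "cmodel M a Np S t"
      unfolding cmodel_def cmodel_axioms_def using assms(1,2,3,6,7) tpos card by blast
    interpret cmodel M a Np S t by (rule cm)
    obtain \<mu> where mu: "0 < \<mu>" "kth_eigenvalue (laplacian a) 2 \<le> \<mu>" "\<forall>y. 2 * \<mu> * Wf y \<le> Qf a y"
      using spectral_gap[OF assms(2) assms(3) assms(5) card] by blast
    define N where "N = real CARD('n)"
    have N: "0 < N" by (simp add: N_def)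
    have Vc: "ennreal (V (S u \<omega>)) = ennreal (Wf (S u \<omega>)) * ennreal (1 / N)" for u \<omega>
      unfolding V_Wf N_def[symmetric] using N by (simp add: ennreal_mult''[symmetric] divide_inverse)
    have int: "(\<integral>\<^sup>+ \<omega>. ennreal (V (S u \<omega>)) \<partial>M) = (\<integral>\<^sup>+ \<omega>. ennreal (Wf (S u \<omega>)) \<partial>M) * ennreal (1 / N)"
      if "0 \<le> u" for u
      unfolding Vc by (rule nn_integral_multc) (use WSt_meas[OF that] in measurable)
    have "(\<integral>\<^sup>+ \<omega>. ennreal (V (S t \<omega>)) \<partial>M) = (\<integral>\<^sup>+ \<omega>. ennreal (Wf (S t \<omega>)) \<partial>M) * ennreal (1 / N)"
      using int[of t] assms(8) by simp
    also have "\<dots> \<le> (ennreal (exp (- \<mu> * t / N)) * (\<integral>\<^sup>+\<omega>. ennreal (Wf (S 0 \<omega>)) \<partial>M)) * ennreal (1 / N)"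
      using main_bound[OF mu(1) mu(3)] by (intro mult_right_mono) (simp_all add: N_def)
    also have "\<dots> \<le> (ennreal (exp (- kth_eigenvalue (laplacian a) 2 * t / N)) * (\<integral>\<^sup>+\<omega>. ennreal (Wf (S 0 \<omega>)) \<partial>M)) * ennreal (1 / N)"
    proof -
      have "- \<mu> * t / N \<le> - kth_eigenvalue (laplacian a) 2 * t / N"
        using mu(2) tpos N by (simp add: divide_right_mono mult_right_mono)
      then show ?thesis by (intro mult_right_mono ennreal_leI) auto
    qed
    also have "\<dots> = ennreal (exp (- kth_eigenvalue (laplacian a) 2 * t / N)) * (\<integral>\<^sup>+ \<omega>. ennreal (V (S 0 \<omega>)) \<partial>M)"
      using int[of 0] by (simp add: mult.assoc)
    finally show ?thesis by (simp add: N_def)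
  qed
qed

end
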